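(* Let $\mathcal{H}$ be a finite-dimensional Hilbert space and let the set of free states be $\mathcal{F}(\mathcal{H})=\bigcup_k\mathcal{F}_k(\mathcal{H})\subseteq\mathcal{D}(\mathcal{H})$, where each $\mathcal{F}_k(\mathcal{H})$ is a closed convex set and $\mathcal{F}(\mathcal{H})$ is closed. For any resource state $\rho\in\mathcal{D}(\mathcal{H})\setminus\mathcal{F}(\mathcal{H})$, \[1-\sup_k\ \min_{\{p_i,\Lambda_i\}_i,\{M_i\}_i}\frac{p_{\mathrm{err}}(\rho,\{p_i,\Lambda_i\}_i,\{M_i\}_i)}{\min_{\sigma_k\in\mathcal{F}_k(\mathcal{H})}p_{\mathrm{err}}(\sigma_k,\{p_i,\Lambda_i\}_i,\{M_i\}_i)}=\mathrm{WoR}_{\mathcal{F}(\mathcal{H})}(\rho).\]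
   Context: $\mathcal{D}(\mathcal{H})$ is the set of density operators on $\mathcal{H}$. A channel ensemble $\{p_i,\Lambda_i\}_i$ consists of a finite probability distribution $(p_i)_i$ and quantum channels $\Lambda_i$ from operators on $\mathcal{H}$ to operators on a common finite-dimensional output space; $\{M_i\}_i$ is a POVM on that output space; $p_{\mathrm{err}}(\omega,\{p_i,\Lambda_i\}_i,\{M_i\}_i)=\sum_ip_i\operatorname{tr}[M_i\Lambda_i(\omega)]$. The outer minimum is over all channel ensembles and POVMs. The weight of resource is $\mathrm{WoR}_{\mathcal{F}(\mathcal{H})}(\rho)=\min\{s\ge0:\exists\sigma\in\mathcal{F}(\mathcal{H}),\tau\in\mathcal{D}(\mathcal{H}),\ \rho=s\tau+(1-s)\sigma\}$. *)

theory Defs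
  imports "HOL-Analysis.Analysis" "Jordan_Normal_Form.Matrix"
begin

text \<open>Operators on an n-dimensional Hilbert space are n x n complex matrices (JNF type complex mat).\<close>

definition mtr :: "complex mat \<Rightarrow> complex" where
  "mtr A = (\<Sum>i<dim_row A. A $$ (i,i))"

definition psd :: "nat \<Rightarrow> complex mat \<Rightarrow> bool" where
  "psd n A \<longleftrightarrow> A \<in> carrier_mat n n \<and>
     (\<forall>v\<in>carrier_vec n. Im (\<Sum>i<n. cnj (v $ i) * (A *\<^sub>v v) $ i) = 0 \<and>
                         Re (\<Sum>i<n. cnj (v $ i) * (A *\<^sub>v v) $ i) \<ge> 0)"

definition density :: "nat \<Rightarrow> complex mat \<Rightarrow> bool" where
  "density n \<rho> \<longleftrightarrow> psd n \<rho> \<and> mtr \<rho> = 1"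

definition lin_map :: "nat \<Rightarrow> (complex mat \<Rightarrow> complex mat) \<Rightarrow> bool" where
  "lin_map n \<Lambda> \<longleftrightarrow> (\<forall>A\<in>carrier_mat n n. \<forall>B\<in>carrier_mat n n. \<Lambda> (A + B) = \<Lambda> A + \<Lambda> B) \<and>
                     (\<forall>A\<in>carrier_mat n n. \<forall>c. \<Lambda> (c \<cdot>\<^sub>m A) = c \<cdot>\<^sub>m \<Lambda> A)"

text \<open>id_k \<otimes> Lambda applied to a (k*n) x (k*n) matrix viewed as a k x k block matrix of n x n blocks.\<close>
definition ampl :: "nat \<Rightarrow> nat \<Rightarrow> nat \<Rightarrow> (complex mat \<Rightarrow> complex mat) \<Rightarrow> complex mat \<Rightarrow> complex mat" where
  "ampl k n m \<Lambda> X = mat (k*m) (k*m) (\<lambda>(r,c).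
      \<Lambda> (mat n n (\<lambda>(i,j). X $$ ((r div m) * n + i, (c div m) * n + j))) $$ (r mod m, c mod m))"

definition compl_pos :: "nat \<Rightarrow> nat \<Rightarrow> (complex mat \<Rightarrow> complex mat) \<Rightarrow> bool" where
  "compl_pos n m \<Lambda> \<longleftrightarrow> (\<forall>k X. psd (k*n) X \<longrightarrow> psd (k*m) (ampl k n m \<Lambda> X))"

definition channel :: "nat \<Rightarrow> nat \<Rightarrow> (complex mat \<Rightarrow> complex mat) \<Rightarrow> bool" where
  "channel n m \<Lambda> \<longleftrightarrow> (\<forall>A\<in>carrier_mat n n. \<Lambda> A \<in> carrier_mat m m) \<and> lin_map n \<Lambda> \<and>
     compl_pos n m \<Lambda> \<and> (\<forall>A\<in>carrier_mat n n. mtr (\<Lambda> A) = mtr A)"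

definition povm :: "nat \<Rightarrow> nat \<Rightarrow> (nat \<Rightarrow> complex mat) \<Rightarrow> bool" where
  "povm m N M \<longleftrightarrow> (\<forall>i<N. psd m (M i)) \<and>
     (\<forall>a<m. \<forall>b<m. (\<Sum>i<N. M i $$ (a,b)) = (1\<^sub>m m) $$ (a,b))"

definition ensemble :: "nat \<Rightarrow> nat \<Rightarrow> nat \<Rightarrow> (nat \<Rightarrow> real) \<Rightarrow> (nat \<Rightarrow> complex mat \<Rightarrow> complex mat) \<Rightarrow> bool" where
  "ensemble n m N p \<Lambda> \<longleftrightarrow> (\<forall>i<N. p i \<ge> 0) \<and> (\<Sum>i<N. p i) = 1 \<and> (\<forall>i<N. channel n m (\<Lambda> i))"

type_synonym task = "nat \<times> (nat \<Rightarrow> real) \<times> (nat \<Rightarrow> complex mat \<Rightarrow> complex mat) \<times> (nat \<Rightarrow> complex mat)"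

definition tasks :: "nat \<Rightarrow> task set" where
  "tasks n = {(N, p, \<Lambda>, M). \<exists>m. ensemble n m N p \<Lambda> \<and> povm m N M}"

definition p_err :: "task \<Rightarrow> complex mat \<Rightarrow> real" where
  "p_err T \<omega> = (case T of (N, p, \<Lambda>, M) \<Rightarrow> (\<Sum>i<N. p i * Re (mtr (M i * \<Lambda> i \<omega>))))"

definition convex_mats :: "complex mat set \<Rightarrow> bool" where
  "convex_mats S \<longleftrightarrow> (\<forall>A\<in>S. \<forall>B\<in>S. \<forall>t::real. 0 \<le> t \<and> t \<le> 1 \<longrightarrow>
       complex_of_real t \<cdot>\<^sub>m A + complex_of_real (1 - t) \<cdot>\<^sub>m B \<in> S)"

text \<open>Closedness in the (norm) topology of n x n complex matrices, i.e. under entrywise limits.\<close>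
definition closed_mats :: "nat \<Rightarrow> complex mat set \<Rightarrow> bool" where
  "closed_mats n S \<longleftrightarrow> S \<subseteq> carrier_mat n n \<and>
     (\<forall>X A. (\<forall>t. X t \<in> S) \<longrightarrow> A \<in> carrier_mat n n \<longrightarrow>
        (\<forall>i<n. \<forall>j<n. (\<lambda>t. X t $$ (i,j)) \<longlonglongrightarrow> A $$ (i,j)) \<longrightarrow> A \<in> S)"

definition WoR :: "nat \<Rightarrow> complex mat set \<Rightarrow> complex mat \<Rightarrow> real" where
  "WoR n F \<rho> = Inf {s::real. s \<ge> 0 \<and> (\<exists>\<sigma>\<in>F. \<exists>\<tau>. density n \<tau> \<and>
       \<rho> = complex_of_real s \<cdot>\<^sub>m \<tau> + complex_of_real (1 - s) \<cdot>\<^sub>m \<sigma>)}"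

end

theory Submission
  imports Defs
begin


definition qf :: "nat \<Rightarrow> complex mat \<Rightarrow> (nat \<Rightarrow> complex) \<Rightarrow> complex" where
  "qf n B f = (\<Sum>i<n. \<Sum>j<n. cnj (f i) * B $$ (i,j) * f j)"

lemma qf_vec: assumes "B \<in> carrier_mat n n" "v \<in> carrier_vec n"
  shows "(\<Sum>i<n. cnj (v $ i) * (B *\<^sub>v v) $ i) = qf n B (\<lambda>i. v $ i)"
  unfolding qf_def using assms
  by (auto simp: scalar_prod_def sum_distrib_left mult.assoc lessThan_atLeast0 intro!: sum.cong)

lemma psd_iff: "psd n B \<longleftrightarrow> B \<in> carrier_mat n n \<and> (\<forall>f. Im (qf n B f) = 0 \<and> Re (qf n B f) \<ge> 0)"
proof
  assume "psd n B"
  then have B: "B \<in> carrier_mat n n" and h: "\<And>v. v\<in>carrier_vec n \<Longrightarrow> Im (\<Sum>i<n. cnj (v $ i) * (B *\<^sub>v v) $ i) = 0 \<and>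
                         Re (\<Sum>i<n. cnj (v $ i) * (B *\<^sub>v v) $ i) \<ge> 0" unfolding psd_def by auto
  show "B \<in> carrier_mat n n \<and> (\<forall>f. Im (qf n B f) = 0 \<and> Re (qf n B f) \<ge> 0)"
  proof (intro conjI B allI)
    fix f
    have e: "qf n B f = qf n B (\<lambda>i. vec n f $ i)" unfolding qf_def by (auto intro!: sum.cong)
    have vc: "vec n f \<in> carrier_vec n" by simp
    have 1: "Im (\<Sum>i<n. cnj (vec n f $ i) * (B *\<^sub>v vec n f) $ i) = 0 \<and>
                         Re (\<Sum>i<n. cnj (vec n f $ i) * (B *\<^sub>v vec n f) $ i) \<ge> 0" using h[OF vc] by blast
    show "Im (qf n B f) = 0" "Re (qf n B f) \<ge> 0" using 1 unfolding qf_vec[OF B vc] e[symmetric] by auto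
  qed
next
  assume "B \<in> carrier_mat n n \<and> (\<forall>f. Im (qf n B f) = 0 \<and> Re (qf n B f) \<ge> 0)"
  then have B: "B \<in> carrier_mat n n" and h: "\<forall>f. Im (qf n B f) = 0 \<and> Re (qf n B f) \<ge> 0" by auto
  show "psd n B" unfolding psd_def
    apply (intro conjI B ballI; subst qf_vec[OF B], assumption) using h by blast+
qed



lemma qf_lin: assumes "\<And>i j. i < n \<Longrightarrow> j < n \<Longrightarrow> A $$ (i,j) = a i j"
  shows "qf n A f = (\<Sum>i<n. \<Sum>j<n. cnj (f i) * a i j * f j)"
  unfolding qf_def using assms by (auto intro!: sum.cong)

lemma if0_simps:
  "x * (if P then y else 0) = (if P then x * y else (0::'a::mult_zero))"
  "(if P then y else 0) * x = (if P then y * x else (0::'a::mult_zero))"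
  "cnj (if P then c else 0) = (if P then cnj c else 0)"
  by auto

lemma qf1: assumes "i < n"
  shows "qf n B (\<lambda>a. if a = i then \<alpha> else 0) = cnj \<alpha> * \<alpha> * B $$ (i,i)"
  unfolding qf_def using assms
  by (simp add: if0_simps)

lemma qf2: assumes "i < n" "j < n" "i \<noteq> j"
  shows "qf n B (\<lambda>a. if a = i then \<alpha> else if a = j then \<beta> else 0) =
     cnj \<alpha> * \<alpha> * B $$ (i,i) + cnj \<alpha> * \<beta> * B $$ (i,j) + cnj \<beta> * \<alpha> * B $$ (j,i) + cnj \<beta> * \<beta> * B $$ (j,j)"
proof -
  have f: "(\<lambda>a. if a = i then \<alpha> else if a = j then \<beta> else 0) = (\<lambda>a. (if a = i then \<alpha> else 0) + (if a = j then \<beta> else 0))"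
    using assms by auto
  show ?thesis unfolding f qf_def using assms
    by (simp add: distrib_left distrib_right sum.distrib if0_simps)
qed



lemma psd_carrier: "psd n B \<Longrightarrow> B \<in> carrier_mat n n" unfolding psd_def by auto

lemma psd_qf: "psd n B \<Longrightarrow> Im (qf n B f) = 0 \<and> Re (qf n B f) \<ge> 0" unfolding psd_iff by auto

lemma psd_diag: assumes "psd n B" "i < n" shows "Im (B $$ (i,i)) = 0" "Re (B $$ (i,i)) \<ge> 0"
  using psd_qf[OF assms(1), of "\<lambda>a. if a = i then 1 else 0"] qf1[OF assms(2), of B 1] by auto

lemma psd_herm: assumes "psd n B" "i < n" "j < n" shows "B $$ (j,i) = cnj (B $$ (i,j))"
proof (cases "i = j")
  case True then show ?thesis using psd_diag[OF assms(1,2)] by (simp add: complex_eq_iff)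
next
  case False
  have d: "Im (B $$ (i,i)) = 0" "Im (B $$ (j,j)) = 0" using psd_diag assms by auto
  have 1: "Im (qf n B (\<lambda>a. if a = i then 1 else if a = j then 1 else 0)) = 0" using psd_qf[OF assms(1)] by blast
  have 2: "Im (qf n B (\<lambda>a. if a = i then 1 else if a = j then \<i> else 0)) = 0" using psd_qf[OF assms(1)] by blast
  from 1 2 d show ?thesis unfolding qf2[OF assms(2,3) False] by (simp add: complex_eq_iff)
qed

lemma psd_quad: assumes "psd n B" "i < n" "j < n" "i \<noteq> j"
  shows "Re (B $$ (i,i)) - 2 * s * (cmod (B $$ (i,j)))^2 + s^2 * (cmod (B $$ (i,j)))^2 * Re (B $$ (j,j)) \<ge> 0"
proof -
  let ?b = "B $$ (i,j)"
  have h: "B $$ (j,i) = cnj ?b" using psd_herm[OF assms(1,2,3)] .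
  have d: "Im (B $$ (i,i)) = 0" "Im (B $$ (j,j)) = 0" using psd_diag assms by auto
  have "Re (qf n B (\<lambda>a. if a = i then 1 else if a = j then - of_real s * cnj ?b else 0)) \<ge> 0"
    using psd_qf[OF assms(1), of "\<lambda>a. if a = i then 1 else if a = j then - of_real s * cnj ?b else 0"] by simp
  moreover have "qf n B (\<lambda>a. if a = i then 1 else if a = j then - of_real s * cnj ?b else 0)
     = B $$ (i,i) - 2 * of_real s * (cnj ?b * ?b) + of_real s * of_real s * (cnj ?b * ?b) * B $$ (j,j)"
    unfolding qf2[OF assms(2,3,4)] h by (simp add: algebra_simps)
  moreover have "cnj ?b * ?b = of_real ((cmod ?b)^2)"
    by (metis complex_norm_square mult.commute of_real_power)
  ultimately show ?thesis using d by (simp add: power2_eq_square)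
qed

lemma psd_zero_diag: assumes "psd n B" "i < n" "j < n" "B $$ (i,i) = 0"
  shows "B $$ (i,j) = 0" "B $$ (j,i) = 0"
proof -
  show "B $$ (i,j) = 0"
  proof (cases "i = j")
    case True then show ?thesis using assms by simp
  next
    case False
    let ?x = "(cmod (B $$ (i,j)))^2"
    define s where "s = 1 / (Re (B $$ (j,j)) + 1)"
    have dj: "Re (B $$ (j,j)) \<ge> 0" using psd_diag assms by auto
    have s: "s > 0" "s * Re (B $$ (j,j)) < 1" using dj unfolding s_def by (auto simp: field_simps)
    have q: "- 2 * s * ?x + s^2 * ?x * Re (B $$ (j,j)) \<ge> 0" using psd_quad[OF assms(1-3) False, of s] assms(4) by simp
    have "s * ?x * (s * Re (B $$ (j,j)) - 2) \<ge> 0" using q by (simp add: algebra_simps power2_eq_square)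
    moreover have "s * Re (B $$ (j,j)) - 2 < 0" using s by simp
    ultimately have "s * ?x \<le> 0" by (auto simp: zero_le_mult_iff)
    then have "?x \<le> 0" using s by (simp add: mult_le_0_iff)
    then show ?thesis by simp
  qed
  then show "B $$ (j,i) = 0" using psd_herm[OF assms(1,2,3)] by simp
qed

lemma psd_offdiag_bound: assumes "psd n B" "i < n" "j < n"
  shows "cmod (B $$ (i,j)) \<le> (Re (B $$ (i,i)) + Re (B $$ (j,j))) / 2"
proof (cases "i = j")
  case True then show ?thesis using psd_diag[OF assms(1,2)] by (simp add: cmod_def)
next
  case False
  let ?c = "cmod (B $$ (i,j))"
  show ?thesis
  proof (cases "?c = 0")
    case True then show ?thesis using psd_diag(2)[OF assms(1,2)] psd_diag(2)[OF assms(1,3)] by simp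
  next
    case c: False
    have "Re (B $$ (i,i)) - 2 * (1/?c) * ?c^2 + (1/?c)^2 * ?c^2 * Re (B $$ (j,j)) \<ge> 0"
      using psd_quad[OF assms False] by blast
    then show ?thesis using c by (simp add: power2_eq_square field_simps)
  qed
qed



lemma sum_if_const: "(\<Sum>j\<in>A. if P then g j else 0) = (if P then sum g A else 0)"
  by auto

lemma schur_qf: assumes "k < n" "d \<noteq> 0" "cnj d = d" "B $$ (k,k) = d"
  and B': "\<And>i j. i < n \<Longrightarrow> j < n \<Longrightarrow> B' $$ (i,j) = B $$ (i,j) - B $$ (i,k) * B $$ (k,j) / d"
  shows "qf n B' f = qf n B (\<lambda>a. f a - (if a = k then (\<Sum>j<n. B $$ (k,j) * f j) / d else 0))"
proof -
  define \<beta> where "\<beta> = (\<Sum>j<n. B $$ (k,j) * f j)"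
  define \<gamma> where "\<gamma> = (\<Sum>i<n. cnj (f i) * B $$ (i,k))"
  define c where "c = \<beta> / d"
  have "qf n B' f = (\<Sum>i<n. \<Sum>j<n. cnj (f i) * B $$ (i,j) * f j - cnj (f i) * B $$ (i,k) * (B $$ (k,j) * f j) / d)"
    unfolding qf_def by (intro sum.cong refl) (auto simp: B' algebra_simps diff_divide_distrib)
  also have "\<dots> = qf n B f - \<gamma> * \<beta> / d"
    unfolding qf_def \<gamma>_def \<beta>_def sum_subtractf by (simp add: sum_divide_distrib sum_distrib_left sum_distrib_right mult.assoc, rule sum.swap)
  finally have 1: "qf n B' f = qf n B f - \<gamma> * \<beta> / d" .
  have "qf n B (\<lambda>a. f a - (if a = k then c else 0)) = 
     (\<Sum>i<n. \<Sum>j<n. cnj (f i) * B $$ (i,j) * f j - (if j = k then cnj (f i) * B $$ (i,k) * c else 0)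
       - (if i = k then cnj c * B $$ (k,j) * f j else 0) + (if i = k then if j = k then cnj c * d * c else 0 else 0))"
    unfolding qf_def using assms(4) by (intro sum.cong refl) (auto simp: algebra_simps)
  also have "\<dots> = qf n B f - \<gamma> * c - cnj c * \<beta> + cnj c * d * c"
    unfolding qf_def \<gamma>_def \<beta>_def using assms(1)
    by (simp add: sum.distrib sum_subtractf sum_distrib_left sum_distrib_right mult.assoc sum_if_const)
  finally have 2: "qf n B (\<lambda>a. f a - (if a = k then c else 0)) = qf n B f - \<gamma> * c - cnj c * \<beta> + cnj c * d * c" .
  have "cnj c * d * c = cnj c * \<beta>" unfolding c_def using assms(2) by simp
  then show ?thesis unfolding 1 c_def[symmetric] \<beta>_def[symmetric] 2 unfolding c_def using assms(2) by simp
qed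

lemma schur_psd: assumes B: "psd n B" and k: "k < n" and d: "B $$ (k,k) \<noteq> 0"
  shows "psd n (mat n n (\<lambda>(i,j). B $$ (i,j) - B $$ (i,k) * B $$ (k,j) / B $$ (k,k)))"
  unfolding psd_iff
proof (intro conjI allI)
  have c: "cnj (B $$ (k,k)) = B $$ (k,k)" using psd_diag(1)[OF B k] by (simp add: complex_eq_iff)
  fix f
  have "qf n (mat n n (\<lambda>(i,j). B $$ (i,j) - B $$ (i,k) * B $$ (k,j) / B $$ (k,k))) f =
    qf n B (\<lambda>a. f a - (if a = k then (\<Sum>j<n. B $$ (k,j) * f j) / B $$ (k,k) else 0))"
    by (rule schur_qf[OF k d c refl]) simp
  then show "Im (qf n (mat n n (\<lambda>(i,j). B $$ (i,j) - B $$ (i,k) * B $$ (k,j) / B $$ (k,k))) f) = 0"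
    "Re (qf n (mat n n (\<lambda>(i,j). B $$ (i,j) - B $$ (i,k) * B $$ (k,j) / B $$ (k,k))) f) \<ge> 0"
    using psd_qf[OF B] by auto
qed simp

definition tr2 :: "nat \<Rightarrow> complex mat \<Rightarrow> complex mat \<Rightarrow> complex" where
  "tr2 n A B = (\<Sum>i<n. \<Sum>j<n. A $$ (i,j) * B $$ (j,i))"

lemma tr2_psd_aux: assumes A: "psd n A"
  shows "\<forall>B. psd n B \<and> (\<forall>i j. i < n \<longrightarrow> j < n \<longrightarrow> (i < n - m \<or> j < n - m) \<longrightarrow> B $$ (i,j) = 0)
     \<longrightarrow> Re (tr2 n A B) \<ge> 0"
proof (induction m)
  case 0
  then show ?case unfolding tr2_def by simp
next
  case (Suc m)
  show ?case
  proof (intro allI impI, elim conjE)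
    fix B assume B: "psd n B" and z: "\<forall>i j. i < n \<longrightarrow> j < n \<longrightarrow> (i < n - Suc m \<or> j < n - Suc m) \<longrightarrow> B $$ (i,j) = 0"
    show "Re (tr2 n A B) \<ge> 0"
    proof (cases "n \<le> m")
      case True
      then have e: "n - Suc m = n - m" by simp
      show ?thesis using Suc.IH B z unfolding e by blast
    next
      case False
      define k where "k = n - Suc m"
      have k: "k < n" and k1: "Suc k = n - m" using False unfolding k_def by auto
      have zz: "\<And>i j. i < n \<Longrightarrow> j < n \<Longrightarrow> i < k \<or> j < k \<Longrightarrow> B $$ (i,j) = 0"
        using z unfolding k_def by blast
      show ?thesis
      proof (cases "B $$ (k,k) = 0")
        case True
        have "\<forall>i j. i < n \<longrightarrow> j < n \<longrightarrow> (i < n - m \<or> j < n - m) \<longrightarrow> B $$ (i,j) = 0"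
        proof (intro allI impI)
          fix i j assume ij: "i < n" "j < n" "i < n - m \<or> j < n - m"
          then consider "i < k \<or> j < k" | "i = k" | "j = k" using k1 by linarith
          then show "B $$ (i,j) = 0"
          proof cases
            case 1 then show ?thesis using zz ij by blast
          next
            case 2 then show ?thesis using psd_zero_diag(1)[OF B k ij(2) True] by simp
          next
            case 3 then show ?thesis using psd_zero_diag(2)[OF B k ij(1) True] by simp
          qed
        qed
        then show ?thesis using Suc.IH B by blast
      next
        case False
        let ?d = "B $$ (k,k)"
        define B' where "B' = mat n n (\<lambda>(i,j). B $$ (i,j) - B $$ (i,k) * B $$ (k,j) / ?d)"
        have B': "psd n B'" unfolding B'_def by (rule schur_psd[OF B k False])
        have "\<forall>i j. i < n \<longrightarrow> j < n \<longrightarrow> (i < n - m \<or> j < n - m) \<longrightarrow> B' $$ (i,j) = 0"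
        proof (intro allI impI)
          fix i j assume ij: "i < n" "j < n" "i < n - m \<or> j < n - m"
          then consider "i < k" | "j < k" | "i = k" | "j = k" using k1 by linarith
          note this_cases = this
          have e: "B' $$ (i,j) = B $$ (i,j) - B $$ (i,k) * B $$ (k,j) / ?d" unfolding B'_def using ij by simp
          from this_cases show "B' $$ (i,j) = 0"
          proof cases
            case 1 then show ?thesis unfolding e using zz[of i j] zz[of i k] ij k by simp
          next
            case 2 then show ?thesis unfolding e using zz[of i j] zz[of k j] ij k by simp
          next
            case 3 then show ?thesis unfolding e using False by simp
          next
            case 4 then show ?thesis unfolding e using False by simp
          qed
        qed
        then have IH: "Re (tr2 n A B') \<ge> 0" using Suc.IH B' by blast
        have hc: "\<And>i. i < n \<Longrightarrow> cnj (B $$ (i,k)) = B $$ (k,i)"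
        proof -
          fix i assume i: "i < n" show "cnj (B $$ (i,k)) = B $$ (k,i)" using psd_herm[OF B i k] by (rule sym)
        qed
        have e1: "qf n A (\<lambda>j. B $$ (j,k)) = (\<Sum>i<n. \<Sum>j<n. A $$ (i,j) * B $$ (j,k) * B $$ (k,i))"
          unfolding qf_def by (intro sum.cong refl) (auto simp: hc)
        have e2: "tr2 n A B' = (\<Sum>i<n. \<Sum>j<n. A $$ (i,j) * B $$ (j,i) - A $$ (i,j) * B $$ (j,k) * B $$ (k,i) / ?d)"
          unfolding tr2_def B'_def by (intro sum.cong refl) (auto simp: algebra_simps diff_divide_distrib)
        have "tr2 n A B' + qf n A (\<lambda>j. B $$ (j,k)) / ?d = (\<Sum>i<n. \<Sum>j<n. (A $$ (i,j) * B $$ (j,i) - A $$ (i,j) * B $$ (j,k) * B $$ (k,i) / ?d) + A $$ (i,j) * B $$ (j,k) * B $$ (k,i) / ?d)"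
          by (simp only: e1 e2 sum_divide_distrib sum.distrib)
        also have "\<dots> = tr2 n A B" unfolding tr2_def by simp
        finally have "tr2 n A B = tr2 n A B' + qf n A (\<lambda>j. B $$ (j,k)) / ?d" by simp
        moreover have "Re (qf n A (\<lambda>j. B $$ (j,k)) / ?d) \<ge> 0"
        proof -
          have "Im ?d = 0" "Re ?d \<ge> 0" using psd_diag[OF B k] by auto
          then have "?d = of_real (Re ?d)" by (simp add: complex_eq_iff)
          then have "Re (qf n A (\<lambda>j. B $$ (j,k)) / ?d) = Re (qf n A (\<lambda>j. B $$ (j,k))) / Re ?d"
            by (metis Re_divide_of_real)
          then show ?thesis using psd_qf[OF A, of "\<lambda>j. B $$ (j,k)"] \<open>Re ?d \<ge> 0\<close> by simp
        qed
        ultimately show ?thesis using IH by simp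
      qed
    qed
  qed
qed

lemma tr2_psd: assumes "psd n A" "psd n B" shows "Re (tr2 n A B) \<ge> 0"
  using tr2_psd_aux[OF assms(1), of n] assms(2) by auto



lemma mtr_mult: assumes "A \<in> carrier_mat m m" "B \<in> carrier_mat m m"
  shows "mtr (A * B) = tr2 m A B"
  unfolding mtr_def tr2_def using assms
  by (auto simp: scalar_prod_def lessThan_atLeast0 intro!: sum.cong)

lemma mtr_add: assumes "A \<in> carrier_mat m m" "B \<in> carrier_mat m m"
  shows "mtr (A + B) = mtr A + mtr B"
  unfolding mtr_def using assms by (auto simp: sum.distrib)

lemma mtr_smult: assumes "A \<in> carrier_mat m m" shows "mtr (c \<cdot>\<^sub>m A) = c * mtr A"
  unfolding mtr_def using assms by (auto simp: sum_distrib_left intro!: sum.cong)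

lemma ampl1: assumes "X \<in> carrier_mat n n" "\<Lambda> X \<in> carrier_mat m m"
  shows "ampl 1 n m \<Lambda> X = \<Lambda> X"
proof -
  have "mat n n (\<lambda>(i,j). X $$ (0 * n + i, 0 * n + j)) = X" using assms(1) by (intro eq_matI) auto
  moreover have "\<And>r. r < m \<Longrightarrow> r div m = 0" "\<And>r. r < m \<Longrightarrow> r mod m = r" by auto
  ultimately show ?thesis unfolding ampl_def using assms(2) by (intro eq_matI) auto
qed

lemma channel_psd: assumes "channel n m \<Lambda>" "psd n X" shows "psd m (\<Lambda> X)"
proof -
  have X: "X \<in> carrier_mat n n" using psd_carrier[OF assms(2)] .
  have L: "\<Lambda> X \<in> carrier_mat m m" using assms(1) X unfolding channel_def by auto
  have "\<forall>k X. psd (k*n) X \<longrightarrow> psd (k*m) (ampl k n m \<Lambda> X)" using assms unfolding channel_def compl_pos_def by blast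
  then have "psd (1*n) X \<longrightarrow> psd (1*m) (ampl 1 n m \<Lambda> X)" by blast
  then have "psd (1*m) (ampl 1 n m \<Lambda> X)" using assms(2) by simp
  then show ?thesis using ampl1[where \<Lambda>=\<Lambda>, OF X L] by simp
qed

lemma tasksD: assumes "(N, p, \<Lambda>, M) \<in> tasks n"
  obtains m where "\<And>i. i < N \<Longrightarrow> p i \<ge> 0" "(\<Sum>i<N. p i) = 1" "\<And>i. i < N \<Longrightarrow> channel n m (\<Lambda> i)"
    "\<And>i. i < N \<Longrightarrow> psd m (M i)"
  using assms unfolding tasks_def ensemble_def povm_def by auto

lemma p_err_nonneg: assumes "T \<in> tasks n" "psd n X" shows "p_err T X \<ge> 0"
proof -
  obtain N p \<Lambda> M where T: "T = (N, p, \<Lambda>, M)" by (cases T) auto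
  obtain m where h: "\<And>i. i < N \<Longrightarrow> p i \<ge> 0" "\<And>i. i < N \<Longrightarrow> channel n m (\<Lambda> i)"
    "\<And>i. i < N \<Longrightarrow> psd m (M i)" using tasksD assms(1) unfolding T by metis
  have "p i * Re (mtr (M i * \<Lambda> i X)) \<ge> 0" if i: "i < N" for i
  proof -
    have P: "psd m (\<Lambda> i X)" using channel_psd h(2)[OF i] assms(2) by blast
    have "Re (mtr (M i * \<Lambda> i X)) \<ge> 0"
      using tr2_psd[OF h(3)[OF i] P] mtr_mult[OF psd_carrier[OF h(3)[OF i]] psd_carrier[OF P]] by simp
    then show ?thesis using h(1)[OF i] by simp
  qed
  then show ?thesis unfolding T p_err_def by (auto intro: sum_nonneg)
qed

lemma p_err_lin: assumes "T \<in> tasks n" "A \<in> carrier_mat n n" "B \<in> carrier_mat n n"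
  shows "p_err T (complex_of_real a \<cdot>\<^sub>m A + complex_of_real b \<cdot>\<^sub>m B) = a * p_err T A + b * p_err T B"
proof -
  obtain N p \<Lambda> M where T: "T = (N, p, \<Lambda>, M)" by (cases T) auto
  obtain m where h: "\<And>i. i < N \<Longrightarrow> channel n m (\<Lambda> i)"
    "\<And>i. i < N \<Longrightarrow> psd m (M i)" using tasksD assms(1) unfolding T by metis
  have "Re (mtr (M i * \<Lambda> i (complex_of_real a \<cdot>\<^sub>m A + complex_of_real b \<cdot>\<^sub>m B))) =
        a * Re (mtr (M i * \<Lambda> i A)) + b * Re (mtr (M i * \<Lambda> i B))" if i: "i < N" for i
  proof -
    have ch: "channel n m (\<Lambda> i)" using h(1)[OF i] .
    have Mi: "M i \<in> carrier_mat m m" using psd_carrier[OF h(2)[OF i]] .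
    have LA: "\<Lambda> i A \<in> carrier_mat m m" "\<Lambda> i B \<in> carrier_mat m m" using ch assms(2,3) unfolding channel_def by auto
    have lin: "lin_map n (\<Lambda> i)" using ch unfolding channel_def by auto
    have "\<Lambda> i (complex_of_real a \<cdot>\<^sub>m A + complex_of_real b \<cdot>\<^sub>m B) = complex_of_real a \<cdot>\<^sub>m \<Lambda> i A + complex_of_real b \<cdot>\<^sub>m \<Lambda> i B"
      using lin assms(2,3) unfolding lin_map_def by simp
    then have "M i * \<Lambda> i (complex_of_real a \<cdot>\<^sub>m A + complex_of_real b \<cdot>\<^sub>m B) = 
       complex_of_real a \<cdot>\<^sub>m (M i * \<Lambda> i A) + complex_of_real b \<cdot>\<^sub>m (M i * \<Lambda> i B)"
    proof -
      have "M i * (complex_of_real a \<cdot>\<^sub>m \<Lambda> i A + complex_of_real b \<cdot>\<^sub>m \<Lambda> i B) =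
        M i * (complex_of_real a \<cdot>\<^sub>m \<Lambda> i A) + M i * (complex_of_real b \<cdot>\<^sub>m \<Lambda> i B)"
        by (rule mult_add_distrib_mat[OF Mi]) (use LA in auto)
      also have "M i * (complex_of_real a \<cdot>\<^sub>m \<Lambda> i A) = complex_of_real a \<cdot>\<^sub>m (M i * \<Lambda> i A)"
        by (rule mult_smult_distrib[OF Mi LA(1)])
      also have "M i * (complex_of_real b \<cdot>\<^sub>m \<Lambda> i B) = complex_of_real b \<cdot>\<^sub>m (M i * \<Lambda> i B)"
        by (rule mult_smult_distrib[OF Mi LA(2)])
      finally show ?thesis using \<open>\<Lambda> i _ = _\<close> by simp
    qed
    then have "mtr (M i * \<Lambda> i (complex_of_real a \<cdot>\<^sub>m A + complex_of_real b \<cdot>\<^sub>m B)) =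
       complex_of_real a * mtr (M i * \<Lambda> i A) + complex_of_real b * mtr (M i * \<Lambda> i B)"
      using Mi LA by (simp add: mtr_add[of _ m] mtr_smult[of _ m])
    then show ?thesis by simp
  qed
  then show ?thesis unfolding T p_err_def by (simp add: sum_distrib_left sum.distrib algebra_simps)
qed



lemma channel_id: "channel n n (\<lambda>X. X)"
  unfolding channel_def lin_map_def compl_pos_def
proof (intro conjI ballI allI impI)
  fix k X assume X: "psd (k*n) X"
  have "ampl k n n (\<lambda>X. X) X = X"
  proof (cases "n = 0")
    case True then show ?thesis using psd_carrier[OF X] unfolding ampl_def by (intro eq_matI) auto
  next
    case False
    show ?thesis unfolding ampl_def
    proof (rule eq_matI)
      fix r c assume "r < dim_row X" "c < dim_col X"
      then have rc: "r < k * n" "c < k * n" using psd_carrier[OF X] by auto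
      have "r div n * n + r mod n = r" "c div n * n + c mod n = c" by simp_all
      moreover have "r mod n < n" "c mod n < n" using False by auto
      ultimately show "mat (k * n) (k * n) (\<lambda>(r, c). mat n n (\<lambda>(i, j). X $$ (r div n * n + i, c div n * n + j)) $$ (r mod n, c mod n)) $$ (r, c) = X $$ (r, c)"
        using rc by simp
    qed (use psd_carrier[OF X] in auto)
  qed
  then show "psd (k*n) (ampl k n n (\<lambda>X. X) X)" using X by simp
qed auto

definition task_of :: "nat \<Rightarrow> complex mat \<Rightarrow> task" where
  "task_of n Y = (2, (\<lambda>i. if i = 0 then 1 else 0), (\<lambda>i X. X), (\<lambda>i. if i = 0 then Y else 1\<^sub>m n - Y))"

lemma task_of_tasks: assumes "psd n Y" "psd n (1\<^sub>m n - Y)" shows "task_of n Y \<in> tasks n"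
  unfolding tasks_def task_of_def
proof (simp, intro exI conjI)
  show "ensemble n n 2 (\<lambda>i. if i = 0 then 1 else 0) (\<lambda>i X. X)"
    unfolding ensemble_def using channel_id by (simp add: numeral_2_eq_2)
  show "povm n 2 (\<lambda>i. if i = 0 then Y else 1\<^sub>m n - Y)"
    unfolding povm_def using assms psd_carrier[OF assms(1)] by (auto simp: numeral_2_eq_2 less_Suc_eq)
qed

lemma p_err_task_of: "p_err (task_of n Y) X = Re (mtr (Y * X))"
  unfolding p_err_def task_of_def by (simp add: numeral_2_eq_2)

lemma cnj_mult_self: "cnj z * z = complex_of_real ((cmod z)^2)"
  by (metis complex_norm_square mult.commute of_real_power)

lemma qf_one: "qf n (1\<^sub>m n) f = (\<Sum>i<n. of_real ((cmod (f i))^2))"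
    unfolding qf_def by (intro sum.cong refl) (simp add: if0_simps cnj_mult_self)

lemma psd_one: "psd n (1\<^sub>m n)"
  unfolding psd_iff
proof (intro conjI allI)
  fix f
  have "qf n (1\<^sub>m n) f = (\<Sum>i<n. of_real ((cmod (f i))^2))" by (rule qf_one)
  then show "Im (qf n (1\<^sub>m n) f) = 0" "Re (qf n (1\<^sub>m n) f) \<ge> 0" by (auto intro: sum_nonneg)
qed simp

lemma psd_zero: "psd n (0\<^sub>m n n)"
  unfolding psd_iff qf_def by simp



definition ip :: "nat \<Rightarrow> complex mat \<Rightarrow> complex mat \<Rightarrow> real" where
  "ip n A B = Re (\<Sum>i<n. \<Sum>j<n. A $$ (i,j) * cnj (B $$ (i,j)))"

definition herm :: "nat \<Rightarrow> complex mat \<Rightarrow> bool" where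
  "herm n A \<longleftrightarrow> (\<forall>i<n. \<forall>j<n. A $$ (j,i) = cnj (A $$ (i,j)))"

lemma hermD: "herm n A \<Longrightarrow> i < n \<Longrightarrow> j < n \<Longrightarrow> cnj (A $$ (i,j)) = A $$ (j,i)"
  unfolding herm_def by (metis complex_cnj_cnj)

lemma psd_herm': "psd n A \<Longrightarrow> herm n A"
  unfolding herm_def using psd_herm by blast

lemma herm_qf_real: assumes "herm n A" shows "Im (qf n A f) = 0"
proof -
  have "cnj (qf n A f) = (\<Sum>i<n. \<Sum>j<n. f i * cnj (A $$ (i,j)) * cnj (f j))"
    unfolding qf_def by simp
  also have "\<dots> = (\<Sum>i<n. \<Sum>j<n. f i * A $$ (j,i) * cnj (f j))"
    using hermD[OF assms] by (intro sum.cong refl) auto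
  also have "\<dots> = (\<Sum>j<n. \<Sum>i<n. f i * A $$ (j,i) * cnj (f j))" by (rule sum.swap)
  also have "\<dots> = qf n A f" unfolding qf_def by (intro sum.cong refl) (simp add: algebra_simps)
  finally show ?thesis by (metis Reals_cnj_iff complex_is_Real_iff)
qed

definition outer :: "nat \<Rightarrow> (nat \<Rightarrow> complex) \<Rightarrow> complex mat" where
  "outer n f = mat n n (\<lambda>(i,j). f i * cnj (f j))"

lemma psd_outer: "psd n (outer n f)"
  unfolding psd_iff
proof (intro conjI allI)
  fix g
  define w where "w = (\<Sum>i<n. cnj (g i) * f i)"
  have "qf n (outer n f) g = (\<Sum>i<n. \<Sum>j<n. (cnj (g i) * f i) * (cnj (f j) * g j))"
    unfolding qf_def outer_def by (intro sum.cong refl) (simp add: algebra_simps)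
  also have "\<dots> = w * cnj w" unfolding w_def by (simp add: sum_product mult.commute)
  finally have "qf n (outer n f) g = of_real ((cmod w)^2)" using cnj_mult_self[of w] by (simp add: mult.commute)
  then show "Im (qf n (outer n f) g) = 0" "Re (qf n (outer n f) g) \<ge> 0" by auto
qed (simp add: outer_def)

lemma ip_outer: "ip n Y (outer n f) = Re (qf n Y f)"
  unfolding ip_def qf_def outer_def by (simp add: algebra_simps)

lemma psd_dual: assumes "Y \<in> carrier_mat n n" "herm n Y" "\<And>Q. psd n Q \<Longrightarrow> ip n Y Q \<ge> 0"
  shows "psd n Y"
  unfolding psd_iff using assms herm_qf_real[OF assms(2)] assms(3)[OF psd_outer] ip_outer by auto

lemma mtr_ip: assumes "A \<in> carrier_mat n n" "B \<in> carrier_mat n n" "herm n B"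
  shows "Re (mtr (A * B)) = ip n A B"
  unfolding mtr_mult[OF assms(1,2)] tr2_def ip_def using hermD[OF assms(3)]
  by (intro arg_cong[where f=Re] sum.cong refl) auto



lemma qf_bound: "Re (qf n Y f) \<le> (\<Sum>i<n. \<Sum>j<n. cmod (Y $$ (i,j))) * (\<Sum>i<n. (cmod (f i))^2)"
proof -
  define N2 where "N2 = (\<Sum>i<n. (cmod (f i))^2)"
  have fi: "(cmod (f i))^2 \<le> N2" if "i < n" for i
    unfolding N2_def by (rule member_le_sum) (use that in auto)
  have pr: "cmod (f i) * cmod (f j) \<le> N2" if "i < n" "j < n" for i j
  proof -
    have "cmod (f i) * cmod (f j) \<le> ((cmod (f i))^2 + (cmod (f j))^2) / 2"
      using zero_le_power2[of "cmod (f i) - cmod (f j)"] unfolding power2_diff by (simp add: field_simps)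
    then show ?thesis using fi[OF that(1)] fi[OF that(2)] by simp
  qed
  have "Re (qf n Y f) \<le> cmod (qf n Y f)" by (rule complex_Re_le_cmod)
  also have "\<dots> \<le> (\<Sum>i<n. cmod (\<Sum>j<n. cnj (f i) * Y $$ (i,j) * f j))" unfolding qf_def by (rule norm_sum)
  also have "\<dots> \<le> (\<Sum>i<n. \<Sum>j<n. cmod (cnj (f i) * Y $$ (i,j) * f j))" by (intro sum_mono norm_sum)
  also have "\<dots> \<le> (\<Sum>i<n. \<Sum>j<n. cmod (Y $$ (i,j)) * N2)"
  proof (intro sum_mono)
    fix i j assume "i \<in> {..<n}" "j \<in> {..<n}"
    then have "cmod (f i) * cmod (f j) \<le> N2" using pr by auto
    then have "cmod (Y $$ (i,j)) * (cmod (f i) * cmod (f j)) \<le> cmod (Y $$ (i,j)) * N2" by (simp add: mult_left_mono)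
    then show "cmod (cnj (f i) * Y $$ (i,j) * f j) \<le> cmod (Y $$ (i,j)) * N2" by (simp add: norm_mult algebra_simps)
  qed
  also have "\<dots> = (\<Sum>i<n. \<Sum>j<n. cmod (Y $$ (i,j))) * N2" by (simp add: sum_distrib_right)
  finally show ?thesis unfolding N2_def .
qed

lemma psd_one_minus: assumes Y: "psd n Y"
  shows "\<exists>c>0. psd n (1\<^sub>m n - complex_of_real c \<cdot>\<^sub>m Y)"
proof -
  define S where "S = (\<Sum>i<n. \<Sum>j<n. cmod (Y $$ (i,j)))"
  have S0: "S \<ge> 0" unfolding S_def by (intro sum_nonneg) auto
  define c where "c = 1 / (S + 1)"
  have c: "c > 0" "c * S \<le> 1" using S0 unfolding c_def by (auto simp: field_simps)
  have Yc: "Y \<in> carrier_mat n n" using psd_carrier[OF Y] .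
  have "psd n (1\<^sub>m n - complex_of_real c \<cdot>\<^sub>m Y)"
    unfolding psd_iff
  proof (intro conjI allI)
    show "1\<^sub>m n - complex_of_real c \<cdot>\<^sub>m Y \<in> carrier_mat n n" by (rule minus_carrier_mat) (use Yc in simp)
    fix f
    have e: "qf n (1\<^sub>m n - complex_of_real c \<cdot>\<^sub>m Y) f = qf n (1\<^sub>m n) f - complex_of_real c * qf n Y f"
    proof -
      have "qf n (1\<^sub>m n - complex_of_real c \<cdot>\<^sub>m Y) f = (\<Sum>i<n. \<Sum>j<n. cnj (f i) * 1\<^sub>m n $$ (i,j) * f j - complex_of_real c * (cnj (f i) * Y $$ (i,j) * f j))"
        unfolding qf_def using Yc by (intro sum.cong refl) (auto simp: algebra_simps)
      then show ?thesis unfolding qf_def by (simp only: sum_subtractf sum_distrib_left)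
    qed
    have r1: "Im (qf n (1\<^sub>m n) f) = 0" "Re (qf n (1\<^sub>m n) f) = (\<Sum>i<n. (cmod (f i))^2)"
      unfolding qf_one by (simp_all add: Im_sum Re_sum)
    have rY: "Im (qf n Y f) = 0" using psd_qf[OF Y] by blast
    show "Im (qf n (1\<^sub>m n - complex_of_real c \<cdot>\<^sub>m Y) f) = 0" unfolding e using r1 rY by simp
    have b: "Re (qf n Y f) \<le> S * (\<Sum>i<n. (cmod (f i))^2)" unfolding S_def by (rule qf_bound)
    have N0: "(\<Sum>i<n. (cmod (f i))^2) \<ge> 0" by (intro sum_nonneg) auto
    have "c * Re (qf n Y f) \<le> c * S * (\<Sum>i<n. (cmod (f i))^2)" using b c by (simp add: mult_left_mono mult.assoc)
    also have "\<dots> \<le> (\<Sum>i<n. (cmod (f i))^2)" using c N0 by (simp add: mult_left_le_one_le mult_right_mono[of "c*S" 1, simplified])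
    finally show "Re (qf n (1\<^sub>m n - complex_of_real c \<cdot>\<^sub>m Y) f) \<ge> 0" unfolding e using r1 by simp
  qed
  then show ?thesis using c by blast
qed



lemma bw: fixes X :: "nat \<Rightarrow> 'a \<Rightarrow> complex"
  assumes "finite I" "\<And>t i. i \<in> I \<Longrightarrow> cmod (X t i) \<le> B"
  shows "\<exists>r L. strict_mono r \<and> (\<forall>i\<in>I. (\<lambda>t. X (r t) i) \<longlonglongrightarrow> L i)"
  using assms
proof (induction I rule: finite_induct)
  case empty
  show ?case using strict_mono_id by blast
next
  case (insert a I)
  then obtain r L where r: "strict_mono r" and L: "\<forall>i\<in>I. (\<lambda>t. X (r t) i) \<longlonglongrightarrow> L i" by auto
  have "bounded (range (\<lambda>t. X (r t) a))"
    by (rule bounded_subset[OF bounded_cball[of 0 B]]) (use insert.prems in auto)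
  then obtain l r2 where r2: "strict_mono r2" and l: "((\<lambda>t. X (r t) a) \<circ> r2) \<longlonglongrightarrow> l"
    using bounded_imp_convergent_subsequence by blast
  have "\<forall>i\<in>insert a I. (\<lambda>t. X ((r \<circ> r2) t) i) \<longlonglongrightarrow> (L(a := l)) i"
  proof
    fix i assume i: "i \<in> insert a I"
    show "(\<lambda>t. X ((r \<circ> r2) t) i) \<longlonglongrightarrow> (L(a := l)) i"
    proof (cases "i = a")
      case True then show ?thesis using l by (simp add: o_def)
    next
      case False
      then have "i \<in> I" using i by auto
      then have "((\<lambda>t. X (r t) i) \<circ> r2) \<longlonglongrightarrow> L i" using L LIMSEQ_subseq_LIMSEQ r2 by blast
      then show ?thesis using False by (simp add: o_def)
    qed
  qed
  then show ?case using strict_mono_o[OF r r2] by blast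
qed

lemma density_bound: assumes "density n \<sigma>" "i < n" "j < n" shows "cmod (\<sigma> $$ (i,j)) \<le> 1"
proof -
  have P: "psd n \<sigma>" and tr: "mtr \<sigma> = 1" using assms(1) unfolding density_def by auto
  have C: "\<sigma> \<in> carrier_mat n n" using psd_carrier[OF P] .
  have "Re (mtr \<sigma>) = (\<Sum>k<n. Re (\<sigma> $$ (k,k)))" unfolding mtr_def using C by simp
  then have s: "(\<Sum>k<n. Re (\<sigma> $$ (k,k))) = 1" using tr by simp
  have d: "Re (\<sigma> $$ (k,k)) \<le> 1" if "k < n" for k
  proof -
    have "Re (\<sigma> $$ (k,k)) \<le> (\<Sum>k<n. Re (\<sigma> $$ (k,k)))"
      by (rule member_le_sum) (use that psd_diag(2)[OF P] in auto)
    then show ?thesis using s by simp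
  qed
  show ?thesis using psd_offdiag_bound[OF P assms(2,3)] d[OF assms(2)] d[OF assms(3)] by simp
qed

lemma psd_limit: assumes "\<And>t. psd n (X t)" "\<And>i j. i < n \<Longrightarrow> j < n \<Longrightarrow> (\<lambda>t. X t $$ (i,j)) \<longlonglongrightarrow> L (i,j)"
  shows "psd n (mat n n L)"
  unfolding psd_iff
proof (intro conjI allI)
  fix f
  have "(\<lambda>t. qf n (X t) f) \<longlonglongrightarrow> qf n (mat n n L) f"
    unfolding qf_def by (intro tendsto_sum tendsto_mult tendsto_const) (use assms(2) in auto)
  then have lim1: "(\<lambda>t. Im (qf n (X t) f)) \<longlonglongrightarrow> Im (qf n (mat n n L) f)"
    and lim2: "(\<lambda>t. Re (qf n (X t) f)) \<longlonglongrightarrow> Re (qf n (mat n n L) f)" by (auto intro: tendsto_Im tendsto_Re)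
  have "(\<lambda>t. Im (qf n (X t) f)) = (\<lambda>t. 0)" using psd_qf[OF assms(1)] by auto
  then show "Im (qf n (mat n n L) f) = 0" using lim1 LIMSEQ_unique tendsto_const by metis
  show "Re (qf n (mat n n L) f) \<ge> 0"
    by (rule LIMSEQ_le_const[OF lim2]) (use psd_qf[OF assms(1)] in auto)
qed simp

lemma psd_comb: assumes "psd n A" "psd n B" "a \<ge> 0" "b \<ge> 0"
  shows "psd n (mat n n (\<lambda>(i,j). of_real a * A $$ (i,j) + of_real b * B $$ (i,j)))"
  unfolding psd_iff
proof (intro conjI allI)
  fix f
  have "qf n (mat n n (\<lambda>(i,j). of_real a * A $$ (i,j) + of_real b * B $$ (i,j))) f = of_real a * qf n A f + of_real b * qf n B f"
    unfolding qf_def by (simp add: sum.distrib sum_distrib_left algebra_simps)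
  then show "Im (qf n (mat n n (\<lambda>(i,j). of_real a * A $$ (i,j) + of_real b * B $$ (i,j))) f) = 0"
    "Re (qf n (mat n n (\<lambda>(i,j). of_real a * A $$ (i,j) + of_real b * B $$ (i,j))) f) \<ge> 0"
    using psd_qf[OF assms(1), of f] psd_qf[OF assms(2), of f] assms(3,4) by auto
qed simp

lemma ip_lin: assumes "\<And>i j. i < n \<Longrightarrow> j < n \<Longrightarrow> C $$ (i,j) = A $$ (i,j) + of_real c * B $$ (i,j)"
  shows "ip n Z C = ip n Z A + c * ip n Z B"
proof -
  have "(\<Sum>i<n. \<Sum>j<n. Z $$ (i,j) * cnj (C $$ (i,j))) = (\<Sum>i<n. \<Sum>j<n. Z $$ (i,j) * cnj (A $$ (i,j)) + of_real c * (Z $$ (i,j) * cnj (B $$ (i,j))))"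
    using assms by (intro sum.cong refl) (auto simp: algebra_simps)
  then show ?thesis unfolding ip_def by (simp add: sum.distrib sum_distrib_left distrib_left)
qed

lemma nm_expand: assumes "\<And>i j. i < n \<Longrightarrow> j < n \<Longrightarrow> C $$ (i,j) = A $$ (i,j) + of_real c * B $$ (i,j)"
  shows "ip n C C = ip n A A + 2 * c * ip n A B + c^2 * ip n B B"
proof -
  have "(\<Sum>i<n. \<Sum>j<n. Re (C $$ (i,j) * cnj (C $$ (i,j)))) = (\<Sum>i<n. \<Sum>j<n. Re (A $$ (i,j) * cnj (A $$ (i,j))) + 2 * c * Re (A $$ (i,j) * cnj (B $$ (i,j))) + c^2 * Re (B $$ (i,j) * cnj (B $$ (i,j))))"
    using assms by (intro sum.cong refl) (auto simp: algebra_simps power2_eq_square)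
  then show ?thesis unfolding ip_def by (simp add: sum.distrib sum_distrib_left distrib_left)
qed

lemma ip_self: "ip n A A = (\<Sum>i<n. \<Sum>j<n. (cmod (A $$ (i,j)))^2)"
  unfolding ip_def by (simp add: cmod_power2 flip: power2_eq_square)

lemma ip_self_nonneg: "ip n A A \<ge> 0"
  unfolding ip_self by (intro sum_nonneg) auto

lemma ip_self_entry: "i < n \<Longrightarrow> j < n \<Longrightarrow> (cmod (A $$ (i,j)))^2 \<le> ip n A A"
  unfolding ip_self
proof -
  assume ij: "i < n" "j < n"
  have "(cmod (A $$ (i,j)))^2 \<le> (\<Sum>j<n. (cmod (A $$ (i,j)))^2)" by (rule member_le_sum) (use ij in auto)
  also have "\<dots> \<le> (\<Sum>i<n. \<Sum>j<n. (cmod (A $$ (i,j)))^2)" by (rule member_le_sum[of i "{..<n}" "\<lambda>i. \<Sum>j<n. (cmod (A $$ (i,j)))^2"]) (use ij in \<open>auto intro: sum_nonneg\<close>)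
  finally show "(cmod (A $$ (i,j)))^2 \<le> (\<Sum>i<n. \<Sum>j<n. (cmod (A $$ (i,j)))^2)" .
qed

lemma ip_self_zero: "ip n A A = 0 \<Longrightarrow> i < n \<Longrightarrow> j < n \<Longrightarrow> A $$ (i,j) = 0"
  using ip_self_entry[of i n j A] by simp

lemma theta_lemma: fixes a b :: real assumes "b \<ge> 0" "\<And>\<theta>. 0 < \<theta> \<Longrightarrow> \<theta> \<le> 1 \<Longrightarrow> 2 * \<theta> * a + \<theta>^2 * b \<ge> 0"
  shows "a \<ge> 0"
proof (rule ccontr)
  assume "\<not> a \<ge> 0"
  then have a: "a < 0" by simp
  define \<theta> where "\<theta> = min 1 (- a / (b + 1))"
  have "0 < (- a) / (b + 1)" using a assms(1) by (intro divide_pos_pos) auto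
  then have t: "0 < \<theta>" "\<theta> \<le> 1" unfolding \<theta>_def by auto
  have "\<theta> * b \<le> - a" 
  proof -
    have "\<theta> \<le> - a / (b + 1)" unfolding \<theta>_def by simp
    then have "\<theta> * (b + 1) \<le> - a" using assms(1) by (simp add: field_simps)
    then show ?thesis using t by (simp add: algebra_simps)
  qed
  then have "2 * a + \<theta> * b < 0" using a by simp
  then have "\<theta> * (2 * a + \<theta> * b) < 0" using t by (simp add: mult_pos_neg)
  then have "2 * \<theta> * a + \<theta>^2 * b < 0" by (simp add: algebra_simps power2_eq_square)
  then show False using assms(2)[OF t] by simp
qed



lemma ip_neg_left: assumes "\<And>i j. i < n \<Longrightarrow> j < n \<Longrightarrow> Y $$ (i,j) = - Z $$ (i,j)"
  shows "ip n Y Q = - ip n Z Q"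
proof -
  have "(\<Sum>i<n. \<Sum>j<n. Y $$ (i,j) * cnj (Q $$ (i,j))) = - (\<Sum>i<n. \<Sum>j<n. Z $$ (i,j) * cnj (Q $$ (i,j)))"
    unfolding sum_negf[symmetric] using assms by (intro sum.cong refl) auto
  then show ?thesis unfolding ip_def by simp
qed

lemma tri3: "cmod (a - b - c) \<le> cmod a + cmod b + cmod c"
  using norm_triangle_ineq4[of "a - b" c] norm_triangle_ineq4[of a b] by linarith

lemma le_one_plus_sq: "(x::real) \<le> 1 + x^2"
  using zero_le_power2[of "x - 1/2"] unfolding power2_diff by (simp add: field_simps)

lemma ident: "(r::complex) - of_real t * (of_real th * s + of_real (1 - th) * s0) - (of_real th * p + of_real (1-th) * p0) = (r - of_real t * s0 - p0) + of_real th * ((r - of_real t * s - p) - (r - of_real t * s0 - p0))"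
  by (simp add: algebra_simps)

lemma separation:
  fixes t :: real
  assumes rho: "density n \<rho>"
    and Fd: "F \<subseteq> {\<sigma>. density n \<sigma>}" and Fne: "F \<noteq> {}" and Fc: "convex_mats F" and Fcl: "closed_mats n F"
    and ns: "\<And>\<sigma>. \<sigma> \<in> F \<Longrightarrow> \<not> psd n (\<rho> - complex_of_real t \<cdot>\<^sub>m \<sigma>)"
  shows "\<exists>Y. psd n Y \<and> (\<exists>\<delta>>0. \<forall>\<sigma>\<in>F. ip n Y \<rho> + \<delta> \<le> t * ip n Y \<sigma>)"
proof -
  have rhoP: "psd n \<rho>" using rho unfolding density_def by auto
  have rhoC: "\<rho> \<in> carrier_mat n n" using psd_carrier[OF rhoP] .
  have FP: "\<And>\<sigma>. \<sigma> \<in> F \<Longrightarrow> psd n \<sigma>" using Fd unfolding density_def by auto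
  have FC: "\<And>\<sigma>. \<sigma> \<in> F \<Longrightarrow> \<sigma> \<in> carrier_mat n n" using FP psd_carrier by blast
  define G where "G \<sigma> P = mat n n (\<lambda>(i,j). \<rho> $$ (i,j) - of_real t * \<sigma> $$ (i,j) - P $$ (i,j))" for \<sigma> P
  have Gij: "\<And>\<sigma> P i j. i < n \<Longrightarrow> j < n \<Longrightarrow> G \<sigma> P $$ (i,j) = \<rho> $$ (i,j) - of_real t * \<sigma> $$ (i,j) - P $$ (i,j)"
    unfolding G_def by simp
  define K where "K = {G \<sigma> P | \<sigma> P. \<sigma> \<in> F \<and> psd n P}"
  define nm where "nm A = ip n A A" for A
  define d where "d = Inf (nm ` K)"
  obtain \<sigma>1 where \<sigma>1: "\<sigma>1 \<in> F" using Fne by auto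
  have Kne: "nm ` K \<noteq> {}" unfolding K_def using \<sigma>1 psd_zero by blast
  have bdd: "bdd_below (nm ` K)" unfolding nm_def bdd_below_def using ip_self_nonneg by blast
  have dle: "\<And>A. A \<in> K \<Longrightarrow> d \<le> nm A" unfolding d_def using bdd by (auto intro: cInf_lower)
  have d0: "d \<ge> 0" unfolding d_def by (rule cInf_greatest[OF Kne]) (auto simp: nm_def ip_self_nonneg)
  have "\<forall>k::nat. \<exists>p. fst p \<in> F \<and> psd n (snd p) \<and> nm (G (fst p) (snd p)) < d + 1 / (real k + 1)"
  proof
    fix k :: nat
    have "Inf (nm ` K) < d + 1 / (real k + 1)" unfolding d_def by (simp add: add_pos_pos)
    then obtain x where "x \<in> nm ` K" "x < d + 1 / (real k + 1)" using cInf_lessD[OF Kne] by blast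
    then show "\<exists>p. fst p \<in> F \<and> psd n (snd p) \<and> nm (G (fst p) (snd p)) < d + 1 / (real k + 1)" unfolding K_def by auto
  qed
  then obtain f where f: "\<forall>k. fst (f k) \<in> F \<and> psd n (snd (f k)) \<and> nm (G (fst (f k)) (snd (f k))) < d + 1 / (real k + 1)"
    by (rule choice[THEN exE]) blast
  define \<sigma>s where "\<sigma>s k = fst (f k)" for k
  define Ps where "Ps k = snd (f k)" for k
  have sF: "\<And>k. \<sigma>s k \<in> F" and sP: "\<And>k. psd n (Ps k)"
    and sN: "\<And>k. nm (G (\<sigma>s k) (Ps k)) < d + 1 / (real k + 1)" using f unfolding \<sigma>s_def Ps_def by auto
  define I where "I = {..<n} \<times> {..<n}"
  have fI: "finite I" unfolding I_def by simp
  have b\<sigma>: "cmod (\<sigma>s k $$ ij) \<le> 1" if "ij \<in> I" for k ij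
    using density_bound[of n "\<sigma>s k" "fst ij" "snd ij"] sF[of k] Fd that unfolding I_def by auto
  have bP: "cmod (Ps k $$ ij) \<le> 1 + \<bar>t\<bar> + (d + 2)" if ijI: "ij \<in> I" for k ij
  proof -
    obtain i j where ij: "ij = (i,j)" "i < n" "j < n" using ijI unfolding I_def by auto
    have "(cmod (G (\<sigma>s k) (Ps k) $$ (i,j)))^2 \<le> nm (G (\<sigma>s k) (Ps k))" unfolding nm_def by (rule ip_self_entry[OF ij(2,3)])
    also have "\<dots> < d + 1"
    proof -
      have "1 / (real k + 1) \<le> 1" by simp
      then show ?thesis using sN[of k] by linarith
    qed
    finally have g2: "(cmod (G (\<sigma>s k) (Ps k) $$ (i,j)))^2 < d + 1" .
    have g: "cmod (G (\<sigma>s k) (Ps k) $$ (i,j)) \<le> d + 2"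
    proof -
      let ?x = "cmod (G (\<sigma>s k) (Ps k) $$ (i,j))"
      have "?x \<le> 1 + ?x^2" by (rule le_one_plus_sq)
      then show ?thesis using g2 by simp
    qed
    have e: "Ps k $$ (i,j) = \<rho> $$ (i,j) - of_real t * \<sigma>s k $$ (i,j) - G (\<sigma>s k) (Ps k) $$ (i,j)"
      using Gij[OF ij(2,3)] by simp
    have "cmod (Ps k $$ (i,j)) \<le> cmod (\<rho> $$ (i,j)) + cmod (of_real t * \<sigma>s k $$ (i,j)) + cmod (G (\<sigma>s k) (Ps k) $$ (i,j))"
      unfolding e by (rule tri3)
    also have "\<dots> \<le> 1 + \<bar>t\<bar> * 1 + (d + 2)"
    proof -
      have "cmod (\<sigma>s k $$ (i,j)) \<le> 1" using b\<sigma>[OF ijI, of k] unfolding ij(1) .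
      then have "\<bar>t\<bar> * cmod (\<sigma>s k $$ (i,j)) \<le> \<bar>t\<bar>" by (rule mult_left_le) simp
      then show ?thesis using density_bound[OF rho ij(2,3)] g by (simp add: norm_mult)
    qed
    finally show ?thesis unfolding ij(1) by simp
  qed
  obtain r1 L\<sigma> where r1: "strict_mono r1" and L\<sigma>: "\<forall>ij\<in>I. (\<lambda>k. \<sigma>s (r1 k) $$ ij) \<longlonglongrightarrow> L\<sigma> ij"
    using bw[OF fI, of "\<lambda>k ij. \<sigma>s k $$ ij" 1] b\<sigma> by blast
  obtain r2 LP where r2: "strict_mono r2" and LP: "\<forall>ij\<in>I. (\<lambda>k. Ps (r1 (r2 k)) $$ ij) \<longlonglongrightarrow> LP ij"
    using bw[OF fI, of "\<lambda>k ij. Ps (r1 k) $$ ij" "1 + \<bar>t\<bar> + (d + 2)"] bP by blast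
  define r where "r = r1 \<circ> r2"
  have r: "strict_mono r" unfolding r_def using strict_mono_o[OF r1 r2] .
  have L\<sigma>': "(\<lambda>k. \<sigma>s (r k) $$ (i,j)) \<longlonglongrightarrow> L\<sigma> (i,j)" if "i < n" "j < n" for i j
  proof -
    have "((\<lambda>k. \<sigma>s (r1 k) $$ (i,j)) \<circ> r2) \<longlonglongrightarrow> L\<sigma> (i,j)"
      using LIMSEQ_subseq_LIMSEQ[OF _ r2] L\<sigma> that unfolding I_def by blast
    then show ?thesis unfolding r_def by (simp add: o_def)
  qed
  have LP': "(\<lambda>k. Ps (r k) $$ (i,j)) \<longlonglongrightarrow> LP (i,j)" if "i < n" "j < n" for i j
    using LP that unfolding I_def r_def by auto
  define \<sigma>0 where "\<sigma>0 = mat n n L\<sigma>"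
  define P0 where "P0 = mat n n LP"
  have \<sigma>0F: "\<sigma>0 \<in> F"
  proof -
    have "\<forall>X A. (\<forall>t. X t \<in> F) \<longrightarrow> A \<in> carrier_mat n n \<longrightarrow>
        (\<forall>i<n. \<forall>j<n. (\<lambda>t. X t $$ (i,j)) \<longlonglongrightarrow> A $$ (i,j)) \<longrightarrow> A \<in> F" using Fcl unfolding closed_mats_def by blast
    from spec[OF spec[OF this, of "\<lambda>k. \<sigma>s (r k)"], of \<sigma>0] have "(\<forall>k. \<sigma>s (r k) \<in> F) \<longrightarrow> \<sigma>0 \<in> carrier_mat n n \<longrightarrow>
        (\<forall>i<n. \<forall>j<n. (\<lambda>k. \<sigma>s (r k) $$ (i,j)) \<longlonglongrightarrow> \<sigma>0 $$ (i,j)) \<longrightarrow> \<sigma>0 \<in> F" .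
    then show ?thesis using L\<sigma>' sF unfolding \<sigma>0_def by simp
  qed
  have P0P: "psd n P0" unfolding P0_def by (rule psd_limit[of _ "\<lambda>k. Ps (r k)"]) (use sP LP' in auto)
  define z where "z = G \<sigma>0 P0"
  have zK: "z \<in> K" unfolding z_def K_def using \<sigma>0F P0P by blast
  have zij: "z $$ (i,j) = \<rho> $$ (i,j) - of_real t * \<sigma>0 $$ (i,j) - P0 $$ (i,j)" if "i < n" "j < n" for i j
    unfolding z_def using Gij that by simp
  have nmz: "nm z = d"
  proof (rule antisym)
    show "d \<le> nm z" using dle[OF zK] .
    have lim: "(\<lambda>k. nm (G (\<sigma>s (r k)) (Ps (r k)))) \<longlonglongrightarrow> nm z"
    proof -
      have "(\<lambda>k. \<Sum>i<n. \<Sum>j<n. (cmod (G (\<sigma>s (r k)) (Ps (r k)) $$ (i,j)))^2) \<longlonglongrightarrow> (\<Sum>i<n. \<Sum>j<n. (cmod (z $$ (i,j)))^2)"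
      proof (intro tendsto_sum tendsto_power tendsto_norm)
        fix i j assume "i \<in> {..<n}" "j \<in> {..<n}"
        then have ij: "i < n" "j < n" by auto
        have "(\<lambda>k. \<rho> $$ (i,j) - of_real t * \<sigma>s (r k) $$ (i,j) - Ps (r k) $$ (i,j)) \<longlonglongrightarrow> \<rho> $$ (i,j) - of_real t * L\<sigma> (i,j) - LP (i,j)"
          by (intro tendsto_intros L\<sigma>'[OF ij] LP'[OF ij])
        then show "(\<lambda>k. G (\<sigma>s (r k)) (Ps (r k)) $$ (i,j)) \<longlonglongrightarrow> z $$ (i,j)"
          using ij by (simp add: Gij zij \<sigma>0_def P0_def)
      qed
      then show ?thesis unfolding nm_def ip_self .
    qed
    have lim2: "(\<lambda>k. d + inverse (real (Suc k))) \<longlonglongrightarrow> d"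
      using tendsto_add[OF tendsto_const LIMSEQ_inverse_real_of_nat] by simp
    show "nm z \<le> d"
    proof (rule LIMSEQ_le[OF lim lim2], intro exI allI impI)
      fix k :: nat
      have "k \<le> r k" using seq_suble[OF r] .
      then have "1 / (real (r k) + 1) \<le> 1 / (real k + 1)" by (simp add: frac_le)
      then show "nm (G (\<sigma>s (r k)) (Ps (r k))) \<le> d + inverse (real (Suc k))"
        using sN[of "r k"] by (simp add: inverse_eq_divide add.commute)
    qed
  qed
  have dpos: "d > 0"
  proof (rule ccontr)
    assume "\<not> d > 0"
    then have "nm z = 0" using nmz d0 by simp
    then have z0: "\<And>i j. i < n \<Longrightarrow> j < n \<Longrightarrow> z $$ (i,j) = 0" unfolding nm_def using ip_self_zero by blast
    have "\<rho> - complex_of_real t \<cdot>\<^sub>m \<sigma>0 = P0"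
    proof (rule eq_matI)
      fix i j assume "i < dim_row P0" "j < dim_col P0"
      then have ij: "i < n" "j < n" unfolding P0_def by auto
      show "(\<rho> - complex_of_real t \<cdot>\<^sub>m \<sigma>0) $$ (i,j) = P0 $$ (i,j)"
        using z0[OF ij] zij[OF ij] ij rhoC unfolding \<sigma>0_def by simp
    qed (auto simp: P0_def \<sigma>0_def)
    then show False using ns[OF \<sigma>0F] P0P by simp
  qed
  have \<sigma>0P: "psd n \<sigma>0" using FP[OF \<sigma>0F] .
  have \<sigma>0C: "\<sigma>0 \<in> carrier_mat n n" using FC[OF \<sigma>0F] .
  have var: "ip n z (G \<sigma> P) \<ge> d" if \<sigma>F: "\<sigma> \<in> F" and PP: "psd n P" for \<sigma> P
  proof -
    define W where "W = mat n n (\<lambda>(i,j). G \<sigma> P $$ (i,j) - z $$ (i,j))"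
    have "2 * \<theta> * ip n z W + \<theta>^2 * ip n W W \<ge> 0" if th: "0 < \<theta>" "\<theta> \<le> 1" for \<theta>
    proof -
      define \<sigma>t where "\<sigma>t = complex_of_real \<theta> \<cdot>\<^sub>m \<sigma> + complex_of_real (1 - \<theta>) \<cdot>\<^sub>m \<sigma>0"
      define Pt where "Pt = mat n n (\<lambda>(i,j). of_real \<theta> * P $$ (i,j) + of_real (1 - \<theta>) * P0 $$ (i,j))"
      have \<sigma>tF: "\<sigma>t \<in> F" using Fc \<sigma>F \<sigma>0F th unfolding convex_mats_def \<sigma>t_def by auto
      have PtP: "psd n Pt" unfolding Pt_def by (rule psd_comb[OF PP P0P]) (use th in auto)
      have "d \<le> nm (G \<sigma>t Pt)" using dle \<sigma>tF PtP unfolding K_def by blast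
      moreover have "nm (G \<sigma>t Pt) = ip n z z + 2 * \<theta> * ip n z W + \<theta>^2 * ip n W W"
        unfolding nm_def
      proof (rule nm_expand)
        fix i j assume ij: "i < n" "j < n"
        have st: "\<sigma>t $$ (i,j) = of_real \<theta> * \<sigma> $$ (i,j) + of_real (1 - \<theta>) * \<sigma>0 $$ (i,j)"
          unfolding \<sigma>t_def using ij FC[OF \<sigma>F] \<sigma>0C by simp
        show "G \<sigma>t Pt $$ (i,j) = z $$ (i,j) + of_real \<theta> * W $$ (i,j)"
          unfolding W_def Pt_def Gij[OF ij] st index_mat[OF ij] zij[OF ij] prod.case by (rule ident)
      qed
      ultimately show ?thesis using nmz unfolding nm_def by simp
    qed
    then have "ip n z W \<ge> 0" using theta_lemma[OF ip_self_nonneg] by blast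
    moreover have "ip n z (G \<sigma> P) = ip n z z + 1 * ip n z W"
      by (rule ip_lin) (simp add: W_def)
    ultimately show ?thesis using nmz unfolding nm_def by simp
  qed
  have zQ: "ip n z Q \<le> 0" if QP: "psd n Q" for Q
  proof (rule ccontr)
    assume "\<not> ip n z Q \<le> 0"
    then have q: "ip n z Q > 0" by simp
    define c0 where "c0 = ip n z (G \<sigma>0 (0\<^sub>m n n))"
    define lam where "lam = (\<bar>c0\<bar> + 1) / ip n z Q"
    have lam0: "lam \<ge> 0" unfolding lam_def using q by simp
    define P where "P = mat n n (\<lambda>(i,j). of_real lam * Q $$ (i,j) + of_real 0 * Q $$ (i,j))"
    have PP: "psd n P" unfolding P_def by (rule psd_comb[OF QP QP lam0]) simp
    have "ip n z (G \<sigma>0 P) = c0 + (- lam) * ip n z Q"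
      unfolding c0_def by (rule ip_lin) (simp add: Gij P_def)
    also have "\<dots> = c0 - (\<bar>c0\<bar> + 1)" unfolding lam_def using q by simp
    also have "\<dots> < 0" by simp
    finally show False using var[OF \<sigma>0F PP] dpos by simp
  qed
  have zsig: "ip n z \<rho> - t * ip n z \<sigma> \<ge> d" if \<sigma>F: "\<sigma> \<in> F" for \<sigma>
  proof -
    have "ip n z (G \<sigma> (0\<^sub>m n n)) = ip n z \<rho> + (- t) * ip n z \<sigma>"
      by (rule ip_lin) (simp add: Gij)
    then show ?thesis using var[OF \<sigma>F psd_zero] by simp
  qed
  define Y where "Y = mat n n (\<lambda>(i,j). - z $$ (i,j))"
  have Yij: "\<And>i j. i < n \<Longrightarrow> j < n \<Longrightarrow> Y $$ (i,j) = - z $$ (i,j)" unfolding Y_def by simp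
  have ipY: "\<And>Q. ip n Y Q = - ip n z Q" by (rule ip_neg_left) (rule Yij)
  have hz: "herm n z" unfolding herm_def
  proof (intro allI impI)
    fix i j assume ij: "i < n" "j < n"
    show "z $$ (j,i) = cnj (z $$ (i,j))"
      using zij[OF ij] zij[OF ij(2,1)] psd_herm[OF rhoP ij] psd_herm[OF \<sigma>0P ij] psd_herm[OF P0P ij] by simp
  qed
  have YP: "psd n Y"
  proof (rule psd_dual)
    show "Y \<in> carrier_mat n n" unfolding Y_def by simp
    show "herm n Y" unfolding herm_def
    proof (intro allI impI)
      fix i j assume ij: "i < n" "j < n"
      show "Y $$ (j,i) = cnj (Y $$ (i,j))" using Yij[OF ij] Yij[OF ij(2,1)] hermD[OF hz ij] by simp
    qed
    fix Q assume "psd n Q"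
    then show "ip n Y Q \<ge> 0" using zQ[of Q] ipY[of Q] by linarith
  qed
  have "\<forall>\<sigma>\<in>F. ip n Y \<rho> + d \<le> t * ip n Y \<sigma>"
  proof
    fix \<sigma> assume "\<sigma> \<in> F"
    then show "ip n Y \<rho> + d \<le> t * ip n Y \<sigma>" using zsig[of \<sigma>] ipY[of \<rho>] ipY[of \<sigma>] by simp
  qed
  then show ?thesis using YP dpos by blast
qed



lemma psd_smult: assumes "psd n A" "c \<ge> 0" shows "psd n (complex_of_real c \<cdot>\<^sub>m A)"
  unfolding psd_iff
proof (intro conjI allI)
  have A: "A \<in> carrier_mat n n" using psd_carrier[OF assms(1)] .
  then show "complex_of_real c \<cdot>\<^sub>m A \<in> carrier_mat n n" by simp
  fix f
  have "qf n (complex_of_real c \<cdot>\<^sub>m A) f = of_real c * qf n A f"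
    unfolding qf_def sum_distrib_left using A by (intro sum.cong refl) (auto simp: algebra_simps)
  then show "Im (qf n (complex_of_real c \<cdot>\<^sub>m A) f) = 0" "Re (qf n (complex_of_real c \<cdot>\<^sub>m A) f) \<ge> 0"
    using psd_qf[OF assms(1), of f] assms(2) by auto
qed

lemma ip_smult_left: assumes "Y \<in> carrier_mat n n" shows "ip n (complex_of_real c \<cdot>\<^sub>m Y) B = c * ip n Y B"
proof -
  have "(\<Sum>i<n. \<Sum>j<n. (complex_of_real c \<cdot>\<^sub>m Y) $$ (i,j) * cnj (B $$ (i,j))) = of_real c * (\<Sum>i<n. \<Sum>j<n. Y $$ (i,j) * cnj (B $$ (i,j)))"
    unfolding sum_distrib_left using assms by (intro sum.cong refl) (auto simp: algebra_simps)
  then show ?thesis unfolding ip_def by simp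
qed

lemma psd_trace0: assumes "psd n A" "(\<Sum>i<n. A $$ (i,i)) = 0" "i < n" "j < n"
  shows "A $$ (i,j) = 0"
proof -
  have "(\<Sum>i<n. Re (A $$ (i,i))) = 0" using arg_cong[OF assms(2), of Re] by (simp add: Re_sum)
  then have "\<forall>i\<in>{..<n}. Re (A $$ (i,i)) = 0"
    using sum_nonneg_eq_0_iff[of "{..<n}" "\<lambda>i. Re (A $$ (i,i))"] psd_diag(2)[OF assms(1)] by auto
  then have "A $$ (i,i) = 0" using psd_diag(1)[OF assms(1) assms(3)] assms(3) by (simp add: complex_eq_iff)
  then show ?thesis using psd_zero_diag(1)[OF assms(1,3,4)] by simp
qed

lemma density_psd: "density n \<sigma> \<Longrightarrow> psd n \<sigma>" unfolding density_def by auto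
lemma density_carrier: "density n \<sigma> \<Longrightarrow> \<sigma> \<in> carrier_mat n n" using density_psd psd_carrier by blast
lemma density_trace: assumes "density n \<sigma>" shows "(\<Sum>i<n. \<sigma> $$ (i,i)) = 1"
  using assms density_carrier[OF assms] unfolding density_def mtr_def by simp

lemma p_err_one: assumes "density n \<omega>" shows "p_err (task_of n (1\<^sub>m n)) \<omega> = 1"
proof -
  have "1\<^sub>m n * \<omega> = \<omega>" using density_carrier[OF assms] by simp
  then show ?thesis unfolding p_err_task_of using assms unfolding density_def by simp
qed

lemma task_one: "task_of n (1\<^sub>m n) \<in> tasks n"
proof (rule task_of_tasks[OF psd_one])
  have e: "1\<^sub>m n - 1\<^sub>m n = (0\<^sub>m n n :: complex mat)" by (intro eq_matI) auto
  show "psd n (1\<^sub>m n - 1\<^sub>m n)" unfolding e by (rule psd_zero)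
qed



lemma inf_le: assumes "T \<in> tasks n" "F \<subseteq> {\<sigma>. density n \<sigma>}" "\<sigma> \<in> F"
  shows "(INF \<sigma>\<in>F. p_err T \<sigma>) \<le> p_err T \<sigma>"
proof (rule cINF_lower[OF _ assms(3)])
  show "bdd_below ((\<lambda>\<sigma>. p_err T \<sigma>) ` F)" unfolding bdd_below_def
    using assms(1,2) p_err_nonneg density_psd by blast
qed

lemma lower_bound:
  assumes Fd: "F \<subseteq> {\<sigma>. density n \<sigma>}" and rho: "density n \<rho>"
    and T: "T \<in> tasks n" "(INF \<sigma>\<in>F. p_err T \<sigma>) > 0"
    and s: "s \<ge> 0" "\<sigma> \<in> F" "density n \<tau>" "\<rho> = complex_of_real s \<cdot>\<^sub>m \<tau> + complex_of_real (1 - s) \<cdot>\<^sub>m \<sigma>"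
  shows "p_err T \<rho> / (INF \<sigma>\<in>F. p_err T \<sigma>) \<ge> 1 - s"
proof -
  define m where "m = (INF \<sigma>\<in>F. p_err T \<sigma>)"
  have m: "m > 0" "m \<le> p_err T \<sigma>" using T(2) inf_le[OF T(1) Fd s(2)] unfolding m_def by auto
  have pr: "p_err T \<rho> \<ge> 0" using p_err_nonneg[OF T(1) density_psd[OF rho]] .
  show ?thesis
  proof (cases "s \<ge> 1")
    case True
    then show ?thesis using pr m unfolding m_def[symmetric] by (smt (verit) divide_nonneg_pos)
  next
    case False
    have \<sigma>D: "density n \<sigma>" using Fd s(2) by auto
    have "p_err T \<rho> = s * p_err T \<tau> + (1 - s) * p_err T \<sigma>"
      unfolding s(4) by (rule p_err_lin[OF T(1) density_carrier[OF s(3)] density_carrier[OF \<sigma>D]])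
    moreover have "p_err T \<tau> \<ge> 0" using p_err_nonneg[OF T(1) density_psd[OF s(3)]] .
    ultimately have "p_err T \<rho> \<ge> (1 - s) * m" using m False s(1)
      by (smt (verit) mult_left_mono mult_nonneg_nonneg)
    then show ?thesis using m unfolding m_def[symmetric] by (simp add: le_divide_eq)
  qed
qed

lemma upper_bound:
  assumes rho: "density n \<rho>"
    and Fd: "F \<subseteq> {\<sigma>. density n \<sigma>}" and Fne: "F \<noteq> {}" and Fc: "convex_mats F" and Fcl: "closed_mats n F"
    and t: "t > 0"
    and ns: "\<And>\<sigma>. \<sigma> \<in> F \<Longrightarrow> \<not> psd n (\<rho> - complex_of_real t \<cdot>\<^sub>m \<sigma>)"
  shows "\<exists>T\<in>tasks n. (INF \<sigma>\<in>F. p_err T \<sigma>) > 0 \<and> p_err T \<rho> / (INF \<sigma>\<in>F. p_err T \<sigma>) < t"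
proof -
  obtain Y \<delta> where Y: "psd n Y" and \<delta>: "\<delta> > 0" and sep: "\<And>\<sigma>. \<sigma> \<in> F \<Longrightarrow> ip n Y \<rho> + \<delta> \<le> t * ip n Y \<sigma>"
    using separation[OF rho Fd Fne Fc Fcl ns] by blast
  obtain c where c: "c > 0" and Mc: "psd n (1\<^sub>m n - complex_of_real c \<cdot>\<^sub>m Y)" using psd_one_minus[OF Y] by blast
  have YC: "Y \<in> carrier_mat n n" using psd_carrier[OF Y] .
  define M where "M = complex_of_real c \<cdot>\<^sub>m Y"
  have MP: "psd n M" unfolding M_def using psd_smult[OF Y] c by simp
  define T where "T = task_of n M"
  have T: "T \<in> tasks n" unfolding T_def by (rule task_of_tasks[OF MP Mc[folded M_def]])
  have pe: "p_err T \<omega> = c * ip n Y \<omega>" if "density n \<omega>" for \<omega>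
  proof -
    have "p_err T \<omega> = ip n M \<omega>" unfolding T_def p_err_task_of
      by (rule mtr_ip[OF psd_carrier[OF MP] density_carrier[OF that] psd_herm'[OF density_psd[OF that]]])
    then show ?thesis unfolding M_def ip_smult_left[OF YC] .
  qed
  have pr: "p_err T \<rho> \<ge> 0" using p_err_nonneg[OF T density_psd[OF rho]] .
  have key: "t * p_err T \<sigma> \<ge> p_err T \<rho> + c * \<delta>" if "\<sigma> \<in> F" for \<sigma>
  proof -
    have "c * (ip n Y \<rho> + \<delta>) \<le> c * (t * ip n Y \<sigma>)" using sep[OF that] c by (simp add: mult_left_mono)
    then show ?thesis using pe[OF rho] pe[of \<sigma>] that Fd by (auto simp: algebra_simps)
  qed
  define m where "m = (INF \<sigma>\<in>F. p_err T \<sigma>)"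
  have mge: "m \<ge> (p_err T \<rho> + c * \<delta>) / t" unfolding m_def
  proof (rule cINF_greatest[OF Fne])
    fix \<sigma> assume "\<sigma> \<in> F"
    then show "(p_err T \<rho> + c * \<delta>) / t \<le> p_err T \<sigma>" using key t by (simp add: divide_le_eq mult.commute)
  qed
  have cd: "c * \<delta> > 0" using c \<delta> by simp
  have mpos: "m > 0" using mge pr cd t by (smt (verit) divide_pos_pos)
  have "t * m \<ge> p_err T \<rho> + c * \<delta>" using mge t by (simp add: divide_le_eq mult.commute)
  then have "p_err T \<rho> / m < t" using mpos cd by (simp add: divide_less_eq mult.commute)
  then show ?thesis using T mpos unfolding m_def by blast
qed



lemma decomp: assumes rho: "density n \<rho>" and sig: "density n \<sigma>" and t: "t < 1"
  and P: "psd n (\<rho> - complex_of_real t \<cdot>\<^sub>m \<sigma>)"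
  shows "\<exists>\<tau>. density n \<tau> \<and> \<rho> = complex_of_real (1 - t) \<cdot>\<^sub>m \<tau> + complex_of_real (1 - (1 - t)) \<cdot>\<^sub>m \<sigma>"
proof -
  have rC: "\<rho> \<in> carrier_mat n n" and sC: "\<sigma> \<in> carrier_mat n n" using density_carrier rho sig by auto
  define \<tau> where "\<tau> = complex_of_real (1 / (1 - t)) \<cdot>\<^sub>m (\<rho> - complex_of_real t \<cdot>\<^sub>m \<sigma>)"
  have \<tau>P: "psd n \<tau>" unfolding \<tau>_def by (rule psd_smult[OF P]) (use t in simp)
  have \<tau>ij: "\<tau> $$ (i,j) = of_real (1 / (1 - t)) * (\<rho> $$ (i,j) - of_real t * \<sigma> $$ (i,j))" if "i < n" "j < n" for i j
    unfolding \<tau>_def using that rC sC by simp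
  have "mtr \<tau> = (\<Sum>i<n. of_real (1 / (1 - t)) * (\<rho> $$ (i,i) - of_real t * \<sigma> $$ (i,i)))"
    unfolding mtr_def using psd_carrier[OF \<tau>P] \<tau>ij by (intro sum.cong) auto
  also have "\<dots> = of_real (1 / (1 - t)) * ((\<Sum>i<n. \<rho> $$ (i,i)) - of_real t * (\<Sum>i<n. \<sigma> $$ (i,i)))"
    by (simp add: sum_distrib_left sum_subtractf algebra_simps)
  also have "\<dots> = 1"
  proof -
    have "(of_real (1 / (1 - t)) :: complex) * (1 - of_real t * 1) = of_real ((1 / (1 - t)) * (1 - t))" by simp
    also have "\<dots> = 1" using t by simp
    finally show ?thesis unfolding density_trace[OF rho] density_trace[OF sig] .
  qed
  finally have "density n \<tau>" unfolding density_def using \<tau>P by simp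
  moreover have "\<rho> = complex_of_real (1 - t) \<cdot>\<^sub>m \<tau> + complex_of_real (1 - (1 - t)) \<cdot>\<^sub>m \<sigma>"
  proof (rule eq_matI)
    fix i j assume "i < dim_row (complex_of_real (1 - t) \<cdot>\<^sub>m \<tau> + complex_of_real (1 - (1 - t)) \<cdot>\<^sub>m \<sigma>)"
      "j < dim_col (complex_of_real (1 - t) \<cdot>\<^sub>m \<tau> + complex_of_real (1 - (1 - t)) \<cdot>\<^sub>m \<sigma>)"
    then have ij: "i < n" "j < n" using sC by auto
    have "(complex_of_real (1 - t) \<cdot>\<^sub>m \<tau> + complex_of_real (1 - (1 - t)) \<cdot>\<^sub>m \<sigma>) $$ (i,j)
       = of_real (1 - t) * (of_real (1 / (1 - t)) * (\<rho> $$ (i,j) - of_real t * \<sigma> $$ (i,j))) + of_real t * \<sigma> $$ (i,j)"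
      using ij sC psd_carrier[OF \<tau>P] \<tau>ij[OF ij] by simp
    also have "\<dots> = \<rho> $$ (i,j)"
    proof -
      have "of_real (1 - t) * of_real (1 / (1 - t)) = (1::complex)" using t by (simp flip: of_real_mult)
      then have "of_real (1 - t) * (of_real (1 / (1 - t)) * (\<rho> $$ (i,j) - of_real t * \<sigma> $$ (i,j))) = \<rho> $$ (i,j) - of_real t * \<sigma> $$ (i,j)"
        by (metis mult.assoc mult_1)
      then show ?thesis by simp
    qed
    finally show "\<rho> $$ (i,j) = (complex_of_real (1 - t) \<cdot>\<^sub>m \<tau> + complex_of_real (1 - (1 - t)) \<cdot>\<^sub>m \<sigma>) $$ (i,j)" by simp
  qed (use rC sC in auto)
  ultimately show ?thesis by blast
qed

lemma t_one: assumes rho: "density n \<rho>" and sig: "density n \<sigma>"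
  and P: "psd n (\<rho> - complex_of_real 1 \<cdot>\<^sub>m \<sigma>)" shows "\<rho> = \<sigma>"
proof -
  have rC: "\<rho> \<in> carrier_mat n n" and sC: "\<sigma> \<in> carrier_mat n n" using density_carrier rho sig by auto
  have ij: "(\<rho> - complex_of_real 1 \<cdot>\<^sub>m \<sigma>) $$ (i,j) = \<rho> $$ (i,j) - \<sigma> $$ (i,j)" if "i < n" "j < n" for i j
    using that rC sC by simp
  have "(\<Sum>i<n. (\<rho> - complex_of_real 1 \<cdot>\<^sub>m \<sigma>) $$ (i,i)) = (\<Sum>i<n. \<rho> $$ (i,i) - \<sigma> $$ (i,i))"
    using ij by (intro sum.cong) auto
  also have "\<dots> = 0" unfolding sum_subtractf density_trace[OF rho] density_trace[OF sig] by simp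
  finally have tr0: "(\<Sum>i<n. (\<rho> - complex_of_real 1 \<cdot>\<^sub>m \<sigma>) $$ (i,i)) = 0" .
  show ?thesis
  proof (rule eq_matI)
    fix i j assume "i < dim_row \<sigma>" "j < dim_col \<sigma>"
    then have ijn: "i < n" "j < n" using sC by auto
    show "\<rho> $$ (i,j) = \<sigma> $$ (i,j)" using psd_trace0[OF P tr0 ijn] ij[OF ijn] by simp
  qed (use rC sC in auto)
qed



theorem theorem12:
  fixes n :: nat and Fk :: "'k \<Rightarrow> complex mat set" and \<rho> :: "complex mat"
  assumes free_states: "\<And>k. Fk k \<subseteq> {\<sigma>. density n \<sigma>}"
    and nonempty: "\<And>k. Fk k \<noteq> {}"
    and convex: "\<And>k. convex_mats (Fk k)"
    and closed_k: "\<And>k. closed_mats n (Fk k)"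
    and closed_F: "closed_mats n (\<Union>k. Fk k)"
    and rho: "density n \<rho>"
    and resource: "\<rho> \<notin> (\<Union>k. Fk k)"
  shows "1 - (SUP k. INF T \<in> {T \<in> tasks n. (INF \<sigma>\<in>Fk k. p_err T \<sigma>) > 0}.
                 p_err T \<rho> / (INF \<sigma>\<in>Fk k. p_err T \<sigma>))
         = WoR n (\<Union>k. Fk k) \<rho>"
proof -
  define S where "S k = {T \<in> tasks n. (INF \<sigma>\<in>Fk k. p_err T \<sigma>) > 0}" for k
  define R where "R k = (INF T \<in> S k. p_err T \<rho> / (INF \<sigma>\<in>Fk k. p_err T \<sigma>))" for k
  define W where "W = {s::real. s \<ge> 0 \<and> (\<exists>\<sigma>\<in>(\<Union>k. Fk k). \<exists>\<tau>. density n \<tau> \<and>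
       \<rho> = complex_of_real s \<cdot>\<^sub>m \<tau> + complex_of_real (1 - s) \<cdot>\<^sub>m \<sigma>)}"
  have WoR: "WoR n (\<Union>k. Fk k) \<rho> = Inf W" unfolding WoR_def W_def ..
  have rC: "\<rho> \<in> carrier_mat n n" using density_carrier[OF rho] .
  have one_W: "1 \<in> W"
  proof -
    obtain \<sigma> where \<sigma>: "\<sigma> \<in> Fk undefined" using nonempty by blast
    have sC: "\<sigma> \<in> carrier_mat n n" using \<sigma> free_states density_carrier by blast
    have eq: "\<rho> = complex_of_real 1 \<cdot>\<^sub>m \<rho> + complex_of_real (1 - 1) \<cdot>\<^sub>m \<sigma>"
      by (rule eq_matI) (use rC sC in auto)
    have \<sigma>U: "\<sigma> \<in> (\<Union>k. Fk k)" using \<sigma> by blast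
    show ?thesis unfolding W_def
      by (intro CollectI conjI bexI[OF _ \<sigma>U] exI[of _ \<rho>]) (use rho eq in auto)
  qed
  have Wne: "W \<noteq> {}" using one_W by blast
  have Wbdd: "bdd_below W" unfolding bdd_below_def W_def by auto
  have IW0: "Inf W \<ge> 0" by (rule cInf_greatest[OF Wne]) (auto simp: W_def)
  have IW1: "Inf W \<le> 1" by (rule cInf_lower[OF one_W Wbdd])
  define T1 where "T1 = task_of n (1\<^sub>m n)"
  have T1inf: "(INF \<sigma>\<in>Fk k. p_err T1 \<sigma>) = 1" for k
  proof -
    have "(INF \<sigma>\<in>Fk k. p_err T1 \<sigma>) = (INF \<sigma>\<in>Fk k. (1::real))"
      unfolding T1_def by (rule INF_cong[OF refl]) (use p_err_one free_states in blast)
    then show ?thesis using nonempty[of k] by simp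
  qed
  have T1S: "T1 \<in> S k" for k unfolding S_def T1_def using task_one T1inf[of k] unfolding T1_def by simp
  have ratio_nonneg: "p_err T \<rho> / (INF \<sigma>\<in>Fk k. p_err T \<sigma>) \<ge> 0" if "T \<in> S k" for T k
    using that p_err_nonneg[OF _ density_psd[OF rho]] unfolding S_def by auto
  have Rbdd: "bdd_below ((\<lambda>T. p_err T \<rho> / (INF \<sigma>\<in>Fk k. p_err T \<sigma>)) ` S k)" for k
    unfolding bdd_below_def using ratio_nonneg by blast
  have R1: "R k \<le> 1" for k
  proof -
    have "R k \<le> p_err T1 \<rho> / (INF \<sigma>\<in>Fk k. p_err T1 \<sigma>)" unfolding R_def by (rule cINF_lower[OF Rbdd T1S])
    then show ?thesis using T1inf[of k] p_err_one[OF rho] unfolding T1_def by simp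
  qed
  have Rge: "R k \<ge> 1 - s" if "s \<ge> 0" "\<sigma> \<in> Fk k" "density n \<tau>"
    "\<rho> = complex_of_real s \<cdot>\<^sub>m \<tau> + complex_of_real (1 - s) \<cdot>\<^sub>m \<sigma>" for k s \<sigma> \<tau>
    unfolding R_def
  proof (rule cINF_greatest)
    show "S k \<noteq> {}" using T1S by blast
    fix T assume "T \<in> S k"
    then show "1 - s \<le> p_err T \<rho> / (INF \<sigma>\<in>Fk k. p_err T \<sigma>)"
      using lower_bound[OF free_states rho _ _ that] unfolding S_def by blast
  qed
  have Rle: "R k \<le> 1 - Inf W" for k
  proof (rule ccontr)
    assume "\<not> R k \<le> 1 - Inf W"
    then have gt: "R k > 1 - Inf W" by simp
    define t where "t = R k"
    have t: "t > 0" "t \<le> 1" "t > 1 - Inf W" using gt IW1 R1[of k] unfolding t_def by auto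
    have ns: "\<not> psd n (\<rho> - complex_of_real t \<cdot>\<^sub>m \<sigma>)" if \<sigma>: "\<sigma> \<in> Fk k" for \<sigma>
    proof
      assume P: "psd n (\<rho> - complex_of_real t \<cdot>\<^sub>m \<sigma>)"
      have sD: "density n \<sigma>" using \<sigma> free_states by blast
      show False
      proof (cases "t < 1")
        case True
        then obtain \<tau> where "density n \<tau>" "\<rho> = complex_of_real (1 - t) \<cdot>\<^sub>m \<tau> + complex_of_real (1 - (1 - t)) \<cdot>\<^sub>m \<sigma>"
          using decomp[OF rho sD True P] by blast
        then have "1 - t \<in> W" unfolding W_def using \<sigma> True by auto
        then have "Inf W \<le> 1 - t" using cInf_lower[OF _ Wbdd] by blast
        then show False using t by simp
      next
        case False
        then have "t = 1" using t by simp
        then have "\<rho> = \<sigma>" using t_one[OF rho sD] P by simp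
        then show False using resource \<sigma> by blast
      qed
    qed
    obtain T where T: "T \<in> tasks n" "(INF \<sigma>\<in>Fk k. p_err T \<sigma>) > 0" "p_err T \<rho> / (INF \<sigma>\<in>Fk k. p_err T \<sigma>) < t"
      using upper_bound[OF rho free_states nonempty convex closed_k t(1) ns] by blast
    have "T \<in> S k" unfolding S_def using T by simp
    then have "R k \<le> p_err T \<rho> / (INF \<sigma>\<in>Fk k. p_err T \<sigma>)" unfolding R_def by (rule cINF_lower[OF Rbdd])
    then show False using T(3) unfolding t_def by simp
  qed
  have Rbdd_above: "bdd_above (range R)" unfolding bdd_above_def using R1 by blast
  have sup_le: "(SUP k. R k) \<le> 1 - Inf W" by (rule cSUP_least) (use Rle in auto)
  have sup_ge: "(SUP k. R k) \<ge> 1 - Inf W"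
  proof (rule ccontr)
    assume "\<not> (SUP k. R k) \<ge> 1 - Inf W"
    then have lt: "(SUP k. R k) < 1 - Inf W" by simp
    define \<epsilon> where "\<epsilon> = 1 - Inf W - (SUP k. R k)"
    have "Inf W < Inf W + \<epsilon>" using lt unfolding \<epsilon>_def by simp
    then obtain s where s: "s \<in> W" "s < Inf W + \<epsilon>" using cInf_lessD[OF Wne] by blast
    then obtain k \<sigma> \<tau> where h: "s \<ge> 0" "\<sigma> \<in> Fk k" "density n \<tau>"
      "\<rho> = complex_of_real s \<cdot>\<^sub>m \<tau> + complex_of_real (1 - s) \<cdot>\<^sub>m \<sigma>" unfolding W_def by blast
    have "R k \<ge> 1 - s" by (rule Rge[OF h])
    moreover have "R k \<le> (SUP k. R k)" by (rule cSUP_upper[OF _ Rbdd_above]) simp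
    ultimately show False using s(2) unfolding \<epsilon>_def by simp
  qed
  have "(SUP k. R k) = 1 - Inf W" using sup_le sup_ge by simp
  then show ?thesis unfolding WoR R_def S_def by simp
qed



end
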